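(* Let $T\in\mathcal A$ and let $\mathbb Q=\mathbb Q(T)$. There is a family $\mathcal F$ of $\aleph_1$ many dense subsets of $\mathbb Q$ such that for every filter $G\subseteq\mathbb Q$ meeting every member of $\mathcal F$, letting $T^\ast=\bigcup\{<_p:p\in G\}$ (a tree order on $\bigcup\{u^p:p\in G\}$) and $c=\bigcup\{c^p:p\in G\}$, we have $(T^\ast,T,c)\in\mathcal A_2^{\rm sp}$.
   Context: For an ordinal $\gamma<\omega_1$, ${\rm ht}(\gamma)$ is the unique $\alpha$ with $\gamma\in[\omega\alpha,\omega\alpha+\omega)$; ${\rm ht}(\langle\rangle)=-1$. $\mathcal A$ denotes the set of all trees $T$ whose underlying set is $\{\langle\rangle\}\cup X$ for some $X\subseteq\omega_1$, where $\langle\rangle$ is the root, such that $T$ has height $\omega_1$, no uncountable branch, is normal (two distinct elements of the same limit level have different sets of predecessors), and ${\rm lev}_\alpha(T)\subseteq[\omega\alpha,\omega\alpha+\omega)$ for all $\alpha<\omega_1$. $x\cap_T y$ denotes the meet, $x\perp_T y$ incomparability, and for $(x,y)$ with both of level $\alpha$, $\alpha(x,y)=\alpha$. $\mathcal A_2^{\rm sp}$ is the set of triples $(T_1,T_2,c)$ with $T_1,T_2\in\mathcal A$ and $c:\bigcup_{\delta<\omega_1\text{ limit}}{\rm lev}_\delta(T_1)\times{\rm lev}_\delta(T_2)\to\omega$ such that $c(x_1,y_1)=c(x_2,y_2)$ with $(x_1,y_1)\ne(x_2,y_2)$ implies $\alpha(x_1,y_1)\ne\alpha(x_2,y_2)$,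 $x_1\perp_{T_1}x_2$, $y_1\perp_{T_2}y_2$ and ${\rm ht}(x_1\cap_{T_1}x_2)>{\rm ht}(y_1\cap_{T_2}y_2)$. The forcing $\mathbb Q(T)$ for $T\in\mathcal A$ consists of all $p=(u^p,v^p,<_p,c^p)$ such that: (1) $u^p\subseteq\omega_1\cup\{\langle\rangle\}$ and $v^p\subseteq T$ are finite and contain $\langle\rangle$; (2) for every $\alpha\in v^p$ there is $\beta\in u^p$ with ${\rm ht}(\alpha)={\rm ht}(\beta)$; (3) $<_p$ is a tree order on $u^p$ with root $\langle\rangle$, such that $\alpha<_p\beta$ implies ${\rm ht}(\alpha)<{\rm ht}(\beta)$ and any two distinct elements $\alpha,\beta\in u^p$ have a meet $\alpha\cap_{<_p}\beta\in u^p$; (4) $c^p$ is a function from $\bigcup_{\delta<\omega_1\text{ limit}}{\rm lev}_\delta(u^p)\times{\rm lev}_\delta(v^p)$ to $\omega$ (levels of $u^p$ meaning elements of height $\delta$, levels of $v^p$ meaning levels in $T$) such that if $c^p(x_1,y_1)=c^p(x_2,y_2)$ and $(x_1,y_1)\ne(x_2,y_2)$ then $\alpha(x_1,y_1)\ne\alpha(x_2,y_2)$, $x_1\perp_{<_p}x_2$, $y_1\perp_T y_2$ and ${\rm ht}(x_1\cap_{<_p}x_2)>{\rm ht}(y_1\cap_T y_2)$. The order: $p\le q$ iff $u^p\subseteq u^q$, $v^p\subseteq v^q$, $<_p\subseteq<_q$, $c^p\subseteq c^q$, and the meets (and root) computed in $<_p$ remain the meets (and root) in $<_q$. *)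

theory Defs
  imports Main "HOL-Library.Option_ord" "HOL-Library.Countable_Set"
begin

text \<open>Countable ordinals are modelled by a wellorder type 'o that is order-isomorphic
to omega_1 (hypotheses of the theorem). An ordinal gamma < omega_1 is written uniquely as
omega*alpha + n, and is encoded as the pair (alpha, n). The root is None.\<close>

type_synonym 'o node = "('o \<times> nat) option"

definition ht :: "'o node \<Rightarrow> 'o option" where
  "ht x = map_option fst x"

definition is_limit :: "'o::wellorder \<Rightarrow> bool" where
  "is_limit \<delta> \<longleftrightarrow> (\<exists>\<beta>. \<beta> < \<delta>) \<and> (\<forall>\<beta><\<delta>. \<exists>\<gamma>. \<beta> < \<gamma> \<and> \<gamma> < \<delta>)"

definition limit_ht :: "'o::wellorder node \<Rightarrow> bool" where
  "limit_ht x \<longleftrightarrow> (\<exists>\<delta>. ht x = Some \<delta> \<and> is_limit \<delta>)"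

definition tleq :: "('a \<Rightarrow> 'a \<Rightarrow> bool) \<Rightarrow> 'a \<Rightarrow> 'a \<Rightarrow> bool" where
  "tleq lt x y \<longleftrightarrow> lt x y \<or> x = y"

definition tree_on :: "'a set \<Rightarrow> ('a \<Rightarrow> 'a \<Rightarrow> bool) \<Rightarrow> 'a \<Rightarrow> bool" where
  "tree_on S lt r \<longleftrightarrow> r \<in> S \<and> (\<forall>x y. lt x y \<longrightarrow> x \<in> S \<and> y \<in> S)
     \<and> (\<forall>x. \<not> lt x x) \<and> (\<forall>x y z. lt x y \<longrightarrow> lt y z \<longrightarrow> lt x z)
     \<and> wfP lt
     \<and> (\<forall>x\<in>S. \<forall>y z. lt y x \<longrightarrow> lt z x \<longrightarrow> y = z \<or> lt y z \<or> lt z y)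
     \<and> (\<forall>x\<in>S. x \<noteq> r \<longrightarrow> lt r x)"

definition is_meet :: "('a \<Rightarrow> 'a \<Rightarrow> bool) \<Rightarrow> 'a \<Rightarrow> 'a \<Rightarrow> 'a \<Rightarrow> bool" where
  "is_meet lt x y z \<longleftrightarrow> tleq lt z x \<and> tleq lt z y \<and> (\<forall>w. tleq lt w x \<and> tleq lt w y \<longrightarrow> tleq lt w z)"

definition tmeet :: "('a \<Rightarrow> 'a \<Rightarrow> bool) \<Rightarrow> 'a \<Rightarrow> 'a \<Rightarrow> 'a" where
  "tmeet lt x y = (THE z. is_meet lt x y z)"

definition perp :: "('a \<Rightarrow> 'a \<Rightarrow> bool) \<Rightarrow> 'a \<Rightarrow> 'a \<Rightarrow> bool" where
  "perp lt x y \<longleftrightarrow> \<not> tleq lt x y \<and> \<not> tleq lt y x"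

definition is_chain :: "('a \<Rightarrow> 'a \<Rightarrow> bool) \<Rightarrow> 'a set \<Rightarrow> bool" where
  "is_chain lt B \<longleftrightarrow> (\<forall>x\<in>B. \<forall>y\<in>B. tleq lt x y \<or> tleq lt y x)"

definition is_branch :: "'a set \<Rightarrow> ('a \<Rightarrow> 'a \<Rightarrow> bool) \<Rightarrow> 'a set \<Rightarrow> bool" where
  "is_branch S lt B \<longleftrightarrow> B \<subseteq> S \<and> is_chain lt B
     \<and> (\<forall>C. B \<subseteq> C \<and> C \<subseteq> S \<and> is_chain lt C \<longrightarrow> C = B)"

text \<open>The level condition lev_alpha(T) subset [omega alpha, omega alpha + omega)
 says: the non-root predecessors of x are mapped by ht order-preservingly onto {beta. beta < ht x},
 i.e. x lies on tree level ht x.\<close>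
definition in_A :: "'o::wellorder node set \<times> ('o node \<Rightarrow> 'o node \<Rightarrow> bool) \<Rightarrow> bool" where
  "in_A T \<longleftrightarrow> (case T of (S, lt) \<Rightarrow>
      tree_on S lt None
    \<and> (\<forall>x y. lt x y \<longrightarrow> ht x < ht y)
    \<and> (\<forall>x\<in>S. x \<noteq> None \<longrightarrow> ht ` {y. lt y x \<and> y \<noteq> None} = {Some \<beta> | \<beta>. Some \<beta> < ht x})
    \<and> (\<forall>\<alpha>. \<exists>x\<in>S. ht x = Some \<alpha>)
    \<and> (\<forall>B. is_branch S lt B \<longrightarrow> countable B)
    \<and> (\<forall>x\<in>S. \<forall>y\<in>S. x \<noteq> y \<longrightarrow> ht x = ht y \<longrightarrow> limit_ht x \<longrightarrow> {z. lt z x} \<noteq> {z. lt z y}))"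

definition spec_col :: "('o::wellorder node \<Rightarrow> 'o node \<Rightarrow> bool) \<Rightarrow> ('o node \<Rightarrow> 'o node \<Rightarrow> bool)
    \<Rightarrow> ('o node \<times> 'o node \<rightharpoonup> nat) \<Rightarrow> bool" where
  "spec_col lt1 lt2 c \<longleftrightarrow> (\<forall>x1 y1 x2 y2. (x1, y1) \<in> dom c \<longrightarrow> (x2, y2) \<in> dom c
      \<longrightarrow> (x1, y1) \<noteq> (x2, y2) \<longrightarrow> c (x1, y1) = c (x2, y2) \<longrightarrow>
        ht x1 \<noteq> ht x2 \<and> perp lt1 x1 x2 \<and> perp lt2 y1 y2
        \<and> ht (tmeet lt1 x1 x2) > ht (tmeet lt2 y1 y2))"

definition limit_pairs :: "'o::wellorder node set \<Rightarrow> 'o node set \<Rightarrow> ('o node \<times> 'o node) set" where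
  "limit_pairs U V = {(x, y). x \<in> U \<and> y \<in> V \<and> ht x = ht y \<and> limit_ht x}"

definition in_A2sp :: "'o::wellorder node set \<times> ('o node \<Rightarrow> 'o node \<Rightarrow> bool)
    \<Rightarrow> 'o node set \<times> ('o node \<Rightarrow> 'o node \<Rightarrow> bool) \<Rightarrow> ('o node \<times> 'o node \<rightharpoonup> nat) \<Rightarrow> bool" where
  "in_A2sp T1 T2 c \<longleftrightarrow> in_A T1 \<and> in_A T2
     \<and> dom c = limit_pairs (fst T1) (fst T2)
     \<and> spec_col (snd T1) (snd T2) c"

type_synonym 'o cond =
  "'o node set \<times> 'o node set \<times> ('o node \<Rightarrow> 'o node \<Rightarrow> bool) \<times> ('o node \<times> 'o node \<rightharpoonup> nat)"

definition c_u :: "'o cond \<Rightarrow> 'o node set" where "c_u p = fst p"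
definition c_v :: "'o cond \<Rightarrow> 'o node set" where "c_v p = fst (snd p)"
definition c_lt :: "'o cond \<Rightarrow> ('o node \<Rightarrow> 'o node \<Rightarrow> bool)" where "c_lt p = fst (snd (snd p))"
definition c_col :: "'o cond \<Rightarrow> ('o node \<times> 'o node \<rightharpoonup> nat)" where "c_col p = snd (snd (snd p))"

definition is_cond :: "'o::wellorder node set \<times> ('o node \<Rightarrow> 'o node \<Rightarrow> bool) \<Rightarrow> 'o cond \<Rightarrow> bool" where
  "is_cond T p \<longleftrightarrow>
      finite (c_u p) \<and> None \<in> c_u p
    \<and> finite (c_v p) \<and> c_v p \<subseteq> fst T \<and> None \<in> c_v p
    \<and> (\<forall>a\<in>c_v p. \<exists>b\<in>c_u p. ht a = ht b)
    \<and> tree_on (c_u p) (c_lt p) None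
    \<and> (\<forall>a b. c_lt p a b \<longrightarrow> ht a < ht b)
    \<and> (\<forall>a\<in>c_u p. \<forall>b\<in>c_u p. a \<noteq> b \<longrightarrow> (\<exists>z\<in>c_u p. is_meet (c_lt p) a b z))
    \<and> dom (c_col p) = limit_pairs (c_u p) (c_v p)
    \<and> spec_col (c_lt p) (snd T) (c_col p)"

definition QQ :: "'o::wellorder node set \<times> ('o node \<Rightarrow> 'o node \<Rightarrow> bool) \<Rightarrow> 'o cond set" where
  "QQ T = {p. is_cond T p}"

text \<open>p \<le> q means q extends p (q is the stronger condition), as in the paper.\<close>
definition cle :: "'o cond \<Rightarrow> 'o cond \<Rightarrow> bool" where
  "cle p q \<longleftrightarrow> c_u p \<subseteq> c_u q \<and> c_v p \<subseteq> c_v q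
     \<and> (\<forall>a b. c_lt p a b \<longrightarrow> c_lt q a b)
     \<and> c_col p \<subseteq>\<^sub>m c_col q
     \<and> (\<forall>a\<in>c_u p. \<forall>b\<in>c_u p. a \<noteq> b \<longrightarrow> tmeet (c_lt q) a b = tmeet (c_lt p) a b)"

definition dense_in :: "'o cond set \<Rightarrow> 'o cond set \<Rightarrow> bool" where
  "dense_in Q D \<longleftrightarrow> D \<subseteq> Q \<and> (\<forall>p\<in>Q. \<exists>q\<in>D. cle p q)"

definition filter_in :: "'o cond set \<Rightarrow> 'o cond set \<Rightarrow> bool" where
  "filter_in Q G \<longleftrightarrow> G \<subseteq> Q \<and> G \<noteq> {}
     \<and> (\<forall>p\<in>G. \<forall>q\<in>Q. cle q p \<longrightarrow> q \<in> G)
     \<and> (\<forall>p\<in>G. \<forall>q\<in>G. \<exists>r\<in>G. cle p r \<and> cle q r)"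

end

theory Submission
  imports Defs
begin

lemma wfP_ht: fixes r :: "'o::wellorder node \<Rightarrow> 'o node \<Rightarrow> bool"
  assumes "\<And>x y. r x y \<Longrightarrow> ht x < ht y" shows "wfP r"
  using assms wfp_if_convertible_to_wfp wfp_on_less by blast

lemma tleq_refl[simp]: "tleq l x x" by (simp add: tleq_def)

lemma meet_unique:
  assumes irr: "\<And>x. \<not> l x x" and tr: "\<And>x y z. l x y \<Longrightarrow> l y z \<Longrightarrow> l x z"
    and "is_meet l x y z" "is_meet l x y z'"
  shows "z = z'"
proof -
  have "tleq l z z'" "tleq l z' z" using assms(3,4) unfolding is_meet_def by blast+
  then show ?thesis using irr tr unfolding tleq_def by blast
qed

lemma tmeet_eq:
  assumes irr: "\<And>a. \<not> l a a" and tr: "\<And>a b c. l a b \<Longrightarrow> l b c \<Longrightarrow> l a c"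
    and "is_meet l x y z"
  shows "tmeet l x y = z"
  unfolding tmeet_def
proof (rule the_equality)
  show "is_meet l x y z" by fact
  fix z' assume h: "is_meet l x y z'" show "z' = z"
    apply (rule meet_unique[where l=l and x=x and y=y])
       apply (rule irr) apply (erule (1) tr) apply (rule h) apply (rule assms(3)) done
qed

lemma tmeet_eqH:
  assumes "\<forall>a. \<not> l a a" "\<forall>a b c. l a b \<longrightarrow> l b c \<longrightarrow> l a c" "is_meet l x y z"
  shows "tmeet l x y = z"
  by (rule tmeet_eq) (use assms in blast)+

lemma cond_simps[simp]: "c_u (u,v,l,c) = u" "c_v (u,v,l,c) = v" "c_lt (u,v,l,c) = l" "c_col (u,v,l,c) = c"
  by (simp_all add: c_u_def c_v_def c_lt_def c_col_def)

lemma is_cond_tuple: "is_cond T (u,v,l,col) \<longleftrightarrow>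
      finite u \<and> None \<in> u
    \<and> finite v \<and> v \<subseteq> fst T \<and> None \<in> v
    \<and> (\<forall>a\<in>v. \<exists>b\<in>u. ht a = ht b)
    \<and> tree_on u l None
    \<and> (\<forall>a b. l a b \<longrightarrow> ht a < ht b)
    \<and> (\<forall>a\<in>u. \<forall>b\<in>u. a \<noteq> b \<longrightarrow> (\<exists>z\<in>u. is_meet l a b z))
    \<and> dom col = limit_pairs u v
    \<and> spec_col l (snd T) col"
  by (simp add: is_cond_def)

lemma cle_tuple: "cle (u,v,l,c) (u',v',l',c') \<longleftrightarrow> u \<subseteq> u' \<and> v \<subseteq> v'
     \<and> (\<forall>a b. l a b \<longrightarrow> l' a b)
     \<and> c \<subseteq>\<^sub>m c'
     \<and> (\<forall>a\<in>u. \<forall>b\<in>u. a \<noteq> b \<longrightarrow> tmeet l' a b = tmeet l a b)"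
  by (simp add: cle_def)

lemma tree_onD:
  assumes "tree_on S l r"
  shows "r \<in> S" "\<And>x y. l x y \<Longrightarrow> x \<in> S" "\<And>x y. l x y \<Longrightarrow> y \<in> S" "\<And>x. \<not> l x x"
    "\<And>x y z. l x y \<Longrightarrow> l y z \<Longrightarrow> l x z"
    "\<And>x y z. x \<in> S \<Longrightarrow> l y x \<Longrightarrow> l z x \<Longrightarrow> y = z \<or> l y z \<or> l z y"
    "\<And>x. x \<in> S \<Longrightarrow> x \<noteq> r \<Longrightarrow> l r x"
  using assms unfolding tree_on_def by blast+

lemma finite_limit_pairs: "finite U \<Longrightarrow> finite V \<Longrightarrow> finite (limit_pairs U V)"
  by (rule finite_subset[of _ "U \<times> V"]) (auto simp: limit_pairs_def)

lemma fresh_col: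
  fixes col :: "'k \<rightharpoonup> nat"
  assumes "finite (dom col)" "finite N" "N \<inter> dom col = {}"
  shows "\<exists>col'. col \<subseteq>\<^sub>m col' \<and> dom col' = dom col \<union> N \<and>
     (\<forall>k1 k2. k1 \<in> dom col' \<longrightarrow> k2 \<in> dom col' \<longrightarrow> k1 \<noteq> k2 \<longrightarrow> col' k1 = col' k2 \<longrightarrow> k1 \<in> dom col \<and> k2 \<in> dom col)"
proof -
  obtain f :: "'k \<Rightarrow> nat" and n where f: "inj_on f N" using finite_imp_inj_to_nat_seg[OF assms(2)] by blast
  define M where "M = Suc (Max (insert 0 (ran col)))"
  have fr: "finite (ran col)" using assms(1) by (simp add: finite_ran)
  have lt: "m < M" if "col k = Some m" for k m
  proof -
    have "m \<in> ran col" using that by (auto simp: ran_def)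
    then have "m \<le> Max (insert 0 (ran col))" using fr by simp
    then show ?thesis by (simp add: M_def)
  qed
  define col' where "col' k = (if k \<in> N then Some (M + f k) else col k)" for k
  have "col \<subseteq>\<^sub>m col'" unfolding map_le_def col'_def using assms(3) by auto
  moreover have "dom col' = dom col \<union> N" unfolding col'_def dom_def by auto
  moreover have "k1 \<in> dom col \<and> k2 \<in> dom col"
    if h: "k1 \<in> dom col'" "k2 \<in> dom col'" "k1 \<noteq> k2" "col' k1 = col' k2" for k1 k2
  proof (cases "k1 \<in> N")
    case True
    show ?thesis
    proof (cases "k2 \<in> N")
      case True
      then have "f k1 = f k2" using \<open>k1 \<in> N\<close> h(4) by (simp add: col'_def)
      then show ?thesis using f True \<open>k1 \<in> N\<close> h(3) by (simp add: inj_on_eq_iff)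
    next
      case False
      then obtain m where m: "col k2 = Some m" using h(2) by (auto simp: col'_def)
      then have "M + f k1 = m" using h(4) True False by (simp add: col'_def)
      then show ?thesis using lt[OF m] by simp
    qed
  next
    case False
    show ?thesis
    proof (cases "k2 \<in> N")
      case True
      obtain m where m: "col k1 = Some m" using h(1) False by (auto simp: col'_def)
      then have "M + f k2 = m" using h(4) True False by (simp add: col'_def)
      then show ?thesis using lt[OF m] by simp
    next
      case F2: False
      then show ?thesis using h(1,2) False by (auto simp: col'_def dom_def)
    qed
  qed
  ultimately show ?thesis by blast
qed

lemma spec_col_ext:
  assumes sc: "spec_col lt1 lt2 col"
   and fresh: "\<forall>k1 k2. k1 \<in> dom col' \<longrightarrow> k2 \<in> dom col' \<longrightarrow> k1 \<noteq> k2 \<longrightarrow> col' k1 = col' k2 \<longrightarrow> k1 \<in> dom col \<and> k2 \<in> dom col"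
   and le: "col \<subseteq>\<^sub>m col'"
   and tr: "\<And>x1 x2 y1 y2. (x1,y1) \<in> dom col \<Longrightarrow> (x2,y2) \<in> dom col \<Longrightarrow> perp lt1 x1 x2 \<Longrightarrow> perp lt1' x1 x2 \<and> tmeet lt1' x1 x2 = tmeet lt1 x1 x2"
  shows "spec_col lt1' lt2 col'"
  unfolding spec_col_def
proof (intro allI impI)
  fix x1 y1 x2 y2
  assume h: "(x1, y1) \<in> dom col'" "(x2, y2) \<in> dom col'" "(x1, y1) \<noteq> (x2, y2)" "col' (x1, y1) = col' (x2, y2)"
  then have d: "(x1, y1) \<in> dom col" "(x2, y2) \<in> dom col" using fresh by blast+
  have "col (x1,y1) = col (x2,y2)" using h(4) le d unfolding map_le_def by (metis domIff)
  then have "ht x1 \<noteq> ht x2 \<and> perp lt1 x1 x2 \<and> perp lt2 y1 y2 \<and> ht (tmeet lt1 x1 x2) > ht (tmeet lt2 y1 y2)"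
    using sc d h(3) unfolding spec_col_def by blast
  then show "ht x1 \<noteq> ht x2 \<and> perp lt1' x1 x2 \<and> perp lt2 y1 y2 \<and> ht (tmeet lt1' x1 x2) > ht (tmeet lt2 y1 y2)"
    using tr[OF d] by auto
qed

definition ins_lt :: "('a \<Rightarrow> 'a \<Rightarrow> bool) \<Rightarrow> 'a \<Rightarrow> 'a \<Rightarrow> 'a set \<Rightarrow> 'a \<Rightarrow> 'a \<Rightarrow> bool" where
 "ins_lt l w a B y z \<longleftrightarrow> l y z \<or> (z = w \<and> tleq l y a) \<or> (y = w \<and> z \<in> B)"

lemma is_meet_sym: "is_meet l x y z \<longleftrightarrow> is_meet l y x z"
  unfolding is_meet_def by blast

lemma limit_pairs_insert1: "limit_pairs (insert w u) v = limit_pairs u v \<union> limit_pairs {w} v"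
  by (auto simp: limit_pairs_def)

lemma insert_node:
  fixes T :: "'o::wellorder node set \<times> ('o node \<Rightarrow> 'o node \<Rightarrow> bool)"
  assumes cond: "is_cond T (u,v,l,col)"
   and w: "w \<notin> u" "w \<noteq> None" and a: "a \<in> u" "ht a < ht w"
   and B1: "B \<subseteq> u" and B2: "\<And>z. z\<in>B \<Longrightarrow> l a z \<and> ht w < ht z"
   and B3: "\<And>z y. z\<in>B \<Longrightarrow> l y z \<Longrightarrow> y \<in> B \<or> tleq l y a"
   and B4: "\<And>z z'. z\<in>B \<Longrightarrow> l z z' \<Longrightarrow> z' \<in> B"
   and B5: "\<And>z1 z2. z1\<in>B \<Longrightarrow> z2\<in>B \<Longrightarrow> z1 \<noteq> z2 \<Longrightarrow> tmeet l z1 z2 \<in> B"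
  shows "\<exists>col'. is_cond T (insert w u, v, ins_lt l w a B, col') \<and> cle (u,v,l,col) (insert w u, v, ins_lt l w a B, col')"
proof -
  have fu: "finite u" and Nu: "None \<in> u" and fv: "finite v" and vS: "v \<subseteq> fst T" and Nv: "None \<in> v"
    and vu: "\<forall>a\<in>v. \<exists>b\<in>u. ht a = ht b" and tree: "tree_on u l None"
    and htl: "\<And>a b. l a b \<Longrightarrow> ht a < ht b"
    and mt: "\<And>x y. x \<in> u \<Longrightarrow> y \<in> u \<Longrightarrow> x \<noteq> y \<Longrightarrow> \<exists>z\<in>u. is_meet l x y z"
    and dc: "dom col = limit_pairs u v" and sc: "spec_col l (snd T) col"
    using cond unfolding is_cond_tuple by blast+
  note fl1 = tree_onD(2)[OF tree] and fl2 = tree_onD(3)[OF tree] and irr = tree_onD(4)[OF tree]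
   and tr = tree_onD(5)[OF tree] and lin = tree_onD(6)[OF tree] and rt = tree_onD(7)[OF tree]
  define l' where "l' = ins_lt l w a B"
  have l'_iff: "l' y z \<longleftrightarrow> l y z \<or> (z = w \<and> tleq l y a) \<or> (y = w \<and> z \<in> B)" for y z
    by (simp add: l'_def ins_lt_def)
  have lw1: "\<not> l w y" for y using fl1 w(1) by blast
  have lw2: "\<not> l y w" for y using fl2 w(1) by blast
  have wB: "w \<notin> B" using B1 w(1) by blast
  have aw: "a \<noteq> w" using a w by blast
  have old: "l' y z \<longleftrightarrow> l y z" if "y \<noteq> w" "z \<noteq> w" for y z using l'_iff that by auto
  have oldq: "tleq l' y z \<longleftrightarrow> tleq l y z" if "y \<noteq> w" "z \<noteq> w" for y z
    using old[OF that] unfolding tleq_def by blast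
  have sub: "l y z \<Longrightarrow> l' y z" for y z using l'_iff by auto
  have tosw: "l' y w \<longleftrightarrow> tleq l y a" for y using l'_iff lw2 wB by auto
  have fromw: "l' w z \<longleftrightarrow> z \<in> B" for z
  proof -
    have "\<not> tleq l w a" using aw lw1 unfolding tleq_def by blast
    then show ?thesis using l'_iff lw1 by auto
  qed
  have leqa: "tleq l y a \<Longrightarrow> y \<in> u" for y using a fl1 unfolding tleq_def by blast
  have htl': "ht y < ht z" if hl: "l' y z" for y z
  proof -
    consider "l y z" | "z = w" "tleq l y a" | "y = w" "z \<in> B" using hl[unfolded l'_iff] by blast
    then show ?thesis
    proof cases
      case 1 then show ?thesis by (rule htl)
    next
      case 2 then show ?thesis using a(2) htl unfolding tleq_def by (metis order.strict_trans)
    next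
      case 3 then show ?thesis using B2 by blast
    qed
  qed
  have irr': "\<not> l' y y" for y using htl'[of y y] by blast
  have tr': "l' x z" if h1: "l' x y" and h2: "l' y z" for x y z
  proof (cases "y = w")
    case True
    then have "tleq l x a" using h1 tosw by blast
    moreover have "z \<in> B" using h2 True fromw by blast
    ultimately have "l x z" using B2 tr unfolding tleq_def by blast
    then show ?thesis by (rule sub)
  next
    case False
    show ?thesis
    proof (cases "x = w")
      case True
      then have yB: "y \<in> B" using h1 fromw by blast
      show ?thesis
      proof (cases "z = w")
        case True
        then have "tleq l y a" using h2 tosw by blast
        then show ?thesis using yB B2 irr tr unfolding tleq_def by blast
      next
        case False
        then have "l y z" using h2 old \<open>y \<noteq> w\<close> by blast
        then show ?thesis using yB B4 fromw True by blast
      qed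
    next
      case xw: False
      then have lxy: "l x y" using h1 old \<open>y \<noteq> w\<close> by blast
      show ?thesis
      proof (cases "z = w")
        case True
        then have "tleq l y a" using h2 tosw by blast
        then have "tleq l x a" using lxy tr unfolding tleq_def by blast
        then show ?thesis using True tosw by blast
      next
        case False
        then have "l y z" using h2 old \<open>y \<noteq> w\<close> by blast
        then show ?thesis using lxy tr sub by blast
      qed
    qed
  qed
  have fld': "y \<in> insert w u \<and> z \<in> insert w u" if "l' y z" for y z
    using that[unfolded l'_iff] fl1 fl2 leqa B1 by blast
  have lin': "y = z \<or> l' y z \<or> l' z y" if x: "x \<in> insert w u" and hy: "l' y x" and hz: "l' z x" for x y z
  proof (cases "x = w")
    case True
    then have "tleq l y a" "tleq l z a" using hy hz tosw by blast+
    then have "y = z \<or> l y z \<or> l z y" using lin[OF a(1)] unfolding tleq_def by blast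
    then show ?thesis using sub by blast
  next
    case False
    then have xu: "x \<in> u" using x by blast
    have cy: "l y x \<or> (y = w \<and> x \<in> B)" using hy[unfolded l'_iff] False by blast
    have cz: "l z x \<or> (z = w \<and> x \<in> B)" using hz[unfolded l'_iff] False by blast
    show ?thesis
    proof (cases "y = w")
      case True
      show ?thesis
      proof (cases "z = w")
        case True then show ?thesis using \<open>y = w\<close> by simp
      next
        case False
        then have "l z x" "x \<in> B" using cz cy True lw1 by blast+
        then have "z \<in> B \<or> tleq l z a" using B3 by blast
        then show ?thesis using True fromw tosw by blast
      qed
    next
      case yw: False
      show ?thesis
      proof (cases "z = w")
        case True
        then have "l y x" "x \<in> B" using cz cy yw lw1 by blast+
        then have "y \<in> B \<or> tleq l y a" using B3 by blast
        then show ?thesis using True fromw tosw by blast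
      next
        case False
        then have "l y x" "l z x" using cz cy yw by blast+
        then show ?thesis using lin[OF xu] sub by blast
      qed
    qed
  qed
  have rt': "l' None x" if "x \<in> insert w u" "x \<noteq> None" for x
  proof (cases "x = w")
    case True
    have "tleq l None a" using rt[OF a(1)] unfolding tleq_def by (cases "a = None") auto
    then show ?thesis using True tosw by blast
  next
    case False
    then show ?thesis using that rt sub by blast
  qed
  have tree': "tree_on (insert w u) l' None"
    unfolding tree_on_def
    using Nu fld' irr' tr' lin' rt' wfP_ht[of l', OF htl'] by blast
  have irrA: "\<forall>a. \<not> l a a" using irr by blast
  have trA: "\<forall>a b c. l a b \<longrightarrow> l b c \<longrightarrow> l a c" using tr by blast
  have irrA': "\<forall>a. \<not> l' a a" using irr' by blast
  have trA': "\<forall>a b c. l' a b \<longrightarrow> l' b c \<longrightarrow> l' a c" using tr' by blast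
  have meet_old: "is_meet l' x y (tmeet l x y) \<and> tmeet l x y \<in> u" if xy: "x \<in> u" "y \<in> u" "x \<noteq> y" for x y
  proof -
    obtain m where m: "m \<in> u" "is_meet l x y m" using mt[OF xy] by blast
    have tm: "tmeet l x y = m" using tmeet_eqH[OF irrA trA m(2)] .
    have xw: "x \<noteq> w" "y \<noteq> w" "m \<noteq> w" using xy m(1) w(1) by blast+
    have "is_meet l' x y m"
      unfolding is_meet_def
    proof (intro conjI allI impI)
      show "tleq l' m x" "tleq l' m y" using m(2) oldq xw unfolding is_meet_def by blast+
      fix z assume hz: "tleq l' z x \<and> tleq l' z y"
      show "tleq l' z m"
      proof (cases "z = w")
        case True
        then have "x \<in> B" "y \<in> B" using hz fromw xw unfolding tleq_def by blast+
        then have "m \<in> B" using B5 tm xy(3) by blast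
        then show ?thesis using True fromw unfolding tleq_def by blast
      next
        case False
        then have "tleq l z x" "tleq l z y" using hz oldq xw by blast+
        then have "tleq l z m" using m(2) unfolding is_meet_def by blast
        then show ?thesis using oldq False xw by blast
      qed
    qed
    then show ?thesis using tm m(1) by simp
  qed
  have meet_new: "\<exists>m\<in>insert w u. is_meet l' w y m" if yu: "y \<in> u" for y
  proof (cases "y \<in> B")
    case True
    have "is_meet l' w y w" unfolding is_meet_def using True fromw unfolding tleq_def by blast
    then show ?thesis by blast
  next
    case False
    obtain m where m: "m \<in> u" "is_meet l a y m"
    proof (cases "a = y")
      case True
      have "is_meet l a y a" using True unfolding is_meet_def by simp
      then show ?thesis using that a(1) by blast
    next
      case False
      then show ?thesis using that mt[OF a(1) yu] by blast
    qed
    have yw: "y \<noteq> w" "m \<noteq> w" using yu m(1) w(1) by blast+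
    have "is_meet l' w y m"
      unfolding is_meet_def
    proof (intro conjI allI impI)
      have "tleq l m a" using m(2) unfolding is_meet_def by blast
      then show "tleq l' m w" using tosw unfolding tleq_def by blast
      show "tleq l' m y" using m(2) oldq yw unfolding is_meet_def by blast
      fix z assume hz: "tleq l' z w \<and> tleq l' z y"
      have zw: "z \<noteq> w"
      proof
        assume "z = w"
        then have "tleq l' w y" using hz by simp
        then show False using False yw fromw unfolding tleq_def by blast
      qed
      then have "tleq l z a" "tleq l z y" using hz tosw oldq yw unfolding tleq_def by blast+
      then have "tleq l z m" using m(2) unfolding is_meet_def by blast
      then show "tleq l' z m" using oldq zw yw by blast
    qed
    then show ?thesis using m(1) by blast
  qed
  have mt': "\<exists>z\<in>insert w u. is_meet l' x y z" if hxy: "x \<in> insert w u" "y \<in> insert w u" "x \<noteq> y" for x y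
  proof -
    consider "x = w" "y \<in> u" | "y = w" "x \<in> u" | "x \<in> u" "y \<in> u" using hxy by blast
    then show ?thesis
    proof cases
      case 1 then show ?thesis using meet_new by blast
    next
      case 2 then show ?thesis using meet_new is_meet_sym by metis
    next
      case 3 then show ?thesis using meet_old[OF 3 hxy(3)] by blast
    qed
  qed
  have tm_old: "tmeet l' x y = tmeet l x y" if "x \<in> u" "y \<in> u" "x \<noteq> y" for x y
    using tmeet_eqH[OF irrA' trA'] meet_old[OF that] by blast
  define N where "N = limit_pairs {w} v"
  have fN: "finite N" unfolding N_def using fv by (simp add: finite_limit_pairs)
  have Nd: "N \<inter> dom col = {}" unfolding N_def dc limit_pairs_def using w(1) by auto
  have fd: "finite (dom col)" unfolding dc using fu fv by (simp add: finite_limit_pairs)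
  obtain col' where c1: "col \<subseteq>\<^sub>m col'" and c2: "dom col' = dom col \<union> N"
    and c3: "\<forall>k1 k2. k1 \<in> dom col' \<longrightarrow> k2 \<in> dom col' \<longrightarrow> k1 \<noteq> k2 \<longrightarrow> col' k1 = col' k2 \<longrightarrow> k1 \<in> dom col \<and> k2 \<in> dom col"
    using fresh_col[OF fd fN Nd] by blast
  have dc': "dom col' = limit_pairs (insert w u) v"
    unfolding c2 dc N_def by (auto simp: limit_pairs_def)
  have sc': "spec_col l' (snd T) col'"
  proof (rule spec_col_ext[OF sc c3 c1])
    fix x1 x2 y1 y2 assume h: "(x1, y1) \<in> dom col" "(x2, y2) \<in> dom col" "perp l x1 x2"
    then have xu: "x1 \<in> u" "x2 \<in> u" unfolding dc limit_pairs_def by blast+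
    then have xw: "x1 \<noteq> w" "x2 \<noteq> w" using w(1) by blast+
    have ne: "x1 \<noteq> x2" using h(3) unfolding perp_def by auto
    show "perp l' x1 x2 \<and> tmeet l' x1 x2 = tmeet l x1 x2"
      using h(3) oldq xw tm_old[OF xu ne] unfolding perp_def by blast
  qed
  have htlH: "\<forall>a b. l' a b \<longrightarrow> ht a < ht b" using htl' by blast
  have mtH: "\<forall>x\<in>insert w u. \<forall>y\<in>insert w u. x \<noteq> y \<longrightarrow> (\<exists>z\<in>insert w u. is_meet l' x y z)" using mt' by blast
  have vuH: "\<forall>a\<in>v. \<exists>b\<in>insert w u. ht a = ht b" using vu by blast
  have cond': "is_cond T (insert w u, v, l', col')"
    unfolding is_cond_tuple
    using fu Nu fv vS Nv vuH tree' htlH mtH dc' sc' by simp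
  have cle': "cle (u,v,l,col) (insert w u, v, l', col')"
    unfolding cle_tuple using sub c1 tm_old by blast
  show ?thesis unfolding l'_def[symmetric] using cond' cle' by (rule exI[where x=col', OF conjI])
qed

lemma cle_refl: "cle p p"
  unfolding cle_def by (simp add: map_le_refl)

lemma cle_trans: assumes pq: "cle p q" and qr: "cle q r" shows "cle p r"
proof -
  note P = pq[unfolded cle_def] and Q = qr[unfolded cle_def]
  have u: "c_u p \<subseteq> c_u q" "c_u q \<subseteq> c_u r" "c_v p \<subseteq> c_v q" "c_v q \<subseteq> c_v r"
    using P Q by simp_all
  have l: "\<And>a b. c_lt p a b \<Longrightarrow> c_lt r a b" using P Q by simp
  have c: "c_col p \<subseteq>\<^sub>m c_col r" using P Q map_le_trans by metis
  have m1: "\<And>a b. a\<in>c_u p \<Longrightarrow> b\<in>c_u p \<Longrightarrow> a \<noteq> b \<Longrightarrow> tmeet (c_lt q) a b = tmeet (c_lt p) a b"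
    using P by simp
  have m2: "\<And>a b. a\<in>c_u q \<Longrightarrow> b\<in>c_u q \<Longrightarrow> a \<noteq> b \<Longrightarrow> tmeet (c_lt r) a b = tmeet (c_lt q) a b"
    using Q by simp
  have m: "\<forall>a\<in>c_u p. \<forall>b\<in>c_u p. a \<noteq> b \<longrightarrow> tmeet (c_lt r) a b = tmeet (c_lt p) a b"
  proof (intro ballI impI)
    fix a b assume h: "a \<in> c_u p" "b \<in> c_u p" "a \<noteq> b"
    have "tmeet (c_lt r) a b = tmeet (c_lt q) a b" using m2 h u(1) by blast
    also have "\<dots> = tmeet (c_lt p) a b" using m1 h by blast
    finally show "tmeet (c_lt r) a b = tmeet (c_lt p) a b" .
  qed
  show ?thesis unfolding cle_def
    apply (intro conjI)
    using u(1,2) apply (rule subset_trans)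
    using u(3,4) apply (rule subset_trans)
    using l apply blast
    using c apply assumption
    using m apply assumption
    done
qed

lemma ht_Some[simp]: "ht (Some (\<alpha>, n)) = Some \<alpha>" by (simp add: ht_def)
lemma ht_None[simp]: "ht None = None" by (simp add: ht_def)

lemma fresh_name: assumes "finite (u::'o node set)" shows "\<exists>n. Some (\<alpha>, n) \<notin> u"
proof (rule ccontr)
  assume "\<not> ?thesis"
  then have sub: "range (\<lambda>n::nat. Some (\<alpha>, n)) \<subseteq> u" by auto
  have "inj (\<lambda>n::nat. Some (\<alpha>, n))" by (auto intro: injI)
  then have "infinite (range (\<lambda>n::nat. Some (\<alpha>, n)))" using finite_imageD infinite_UNIV_nat by blast
  then show False using sub assms finite_subset by blast
qed

lemma ex_max_on: fixes f :: "'a \<Rightarrow> 'b::linorder"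
  assumes "finite A" "A \<noteq> {}" shows "\<exists>a\<in>A. \<forall>y\<in>A. f y \<le> f a"
proof -
  have "Max (f ` A) \<in> f ` A" using assms by simp
  then obtain a where a: "a \<in> A" "f a = Max (f ` A)" by auto
  have "\<forall>y\<in>A. f y \<le> f a" using a(2) assms(1) by simp
  then show ?thesis using a(1) by blast
qed

lemma ex_min_on: fixes f :: "'a \<Rightarrow> 'b::linorder"
  assumes "finite A" "A \<noteq> {}" shows "\<exists>a\<in>A. \<forall>y\<in>A. f a \<le> f y"
proof -
  have "Min (f ` A) \<in> f ` A" using assms by simp
  then obtain a where a: "a \<in> A" "f a = Min (f ` A)" by auto
  have "\<forall>y\<in>A. f a \<le> f y" using a(2) assms(1) by simp
  then show ?thesis using a(1) by blast
qed

lemma add_leaf: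
  fixes T :: "'o::wellorder node set \<times> ('o node \<Rightarrow> 'o node \<Rightarrow> bool)"
  assumes cond: "is_cond T (u,v,l,col)" and w: "w \<notin> u" "w \<noteq> None"
  shows "\<exists>col'. is_cond T (insert w u, v, ins_lt l w None {}, col') \<and> cle (u,v,l,col) (insert w u, v, ins_lt l w None {}, col')"
proof (rule insert_node[OF cond w])
  show "None \<in> u" using cond unfolding is_cond_tuple by blast
  show "ht None < ht w" using w(2) by (cases w) auto
qed auto

lemma add_v:
  fixes T :: "'o::wellorder node set \<times> ('o node \<Rightarrow> 'o node \<Rightarrow> bool)"
  assumes cond: "is_cond T (u,v,l,col)" and s: "s \<in> fst T" and b: "b \<in> u" "ht b = ht s"
  shows "\<exists>col'. is_cond T (u, insert s v, l, col') \<and> cle (u,v,l,col) (u, insert s v, l, col')"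
proof -
  have fu: "finite u" and Nu: "None \<in> u" and fv: "finite v" and vS: "v \<subseteq> fst T" and Nv: "None \<in> v"
    and vu: "\<forall>a\<in>v. \<exists>b\<in>u. ht a = ht b" and tree: "tree_on u l None"
    and htl: "\<forall>a b. l a b \<longrightarrow> ht a < ht b"
    and mt: "\<forall>a\<in>u. \<forall>b\<in>u. a \<noteq> b \<longrightarrow> (\<exists>z\<in>u. is_meet l a b z)"
    and dc: "dom col = limit_pairs u v" and sc: "spec_col l (snd T) col"
    using cond unfolding is_cond_tuple by blast+
  define N where "N = limit_pairs u (insert s v) - dom col"
  have fN: "finite N" unfolding N_def using fu fv by (simp add: finite_limit_pairs)
  have Nd: "N \<inter> dom col = {}" unfolding N_def by auto
  have fd: "finite (dom col)" unfolding dc using fu fv by (simp add: finite_limit_pairs)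
  obtain col' where c1: "col \<subseteq>\<^sub>m col'" and c2: "dom col' = dom col \<union> N"
    and c3: "\<forall>k1 k2. k1 \<in> dom col' \<longrightarrow> k2 \<in> dom col' \<longrightarrow> k1 \<noteq> k2 \<longrightarrow> col' k1 = col' k2 \<longrightarrow> k1 \<in> dom col \<and> k2 \<in> dom col"
    using fresh_col[OF fd fN Nd] by blast
  have dc': "dom col' = limit_pairs u (insert s v)"
    unfolding c2 N_def dc by (auto simp: limit_pairs_def)
  have sc': "spec_col l (snd T) col'"
    by (rule spec_col_ext[OF sc c3 c1]) simp
  have vu': "\<forall>a\<in>insert s v. \<exists>b\<in>u. ht a = ht b" using vu b(1) b(2)[symmetric] by auto
  have vS': "insert s v \<subseteq> fst T" using vS s by blast
  have cond': "is_cond T (u, insert s v, l, col')"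
    unfolding is_cond_tuple using fu Nu fv vS' Nv vu' tree htl mt dc' sc' by simp
  have "cle (u,v,l,col) (u, insert s v, l, col')"
    unfolding cle_tuple using c1 by blast
  then show ?thesis using cond' by blast
qed

definition D1 :: "'o::wellorder node set \<times> ('o node \<Rightarrow> 'o node \<Rightarrow> bool) \<Rightarrow> 'o node \<Rightarrow> 'o cond set" where
  "D1 T s = {q \<in> QQ T. s \<in> c_v q}"

definition D3 :: "'o::wellorder node set \<times> ('o node \<Rightarrow> 'o node \<Rightarrow> bool) \<Rightarrow> 'o node \<Rightarrow> 'o \<Rightarrow> 'o cond set" where
  "D3 T x \<beta> = {q \<in> QQ T. x \<in> c_u q \<and> (Some \<beta> < ht x \<longrightarrow> (\<exists>y. c_lt q y x \<and> ht y = Some \<beta>))}"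

lemma dense_D1:
  fixes T :: "'o::wellorder node set \<times> ('o node \<Rightarrow> 'o node \<Rightarrow> bool)"
  assumes s: "s \<in> fst T" shows "dense_in (QQ T) (D1 T s)"
  unfolding dense_in_def
proof (intro conjI ballI)
  show "D1 T s \<subseteq> QQ T" unfolding D1_def by blast
  fix p assume "p \<in> QQ T"
  then have pc: "is_cond T p" unfolding QQ_def by blast
  obtain u v l col where p: "p = (u,v,l,col)" by (cases p) auto
  have cond: "is_cond T (u,v,l,col)" using pc p by simp
  show "\<exists>q\<in>D1 T s. cle p q"
  proof (cases "\<exists>b\<in>u. ht b = ht s")
    case True
    then obtain b where "b \<in> u" "ht b = ht s" by blast
    then obtain col' where "is_cond T (u, insert s v, l, col')" "cle (u,v,l,col) (u, insert s v, l, col')"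
      using add_v[OF cond s] by blast
    then show ?thesis unfolding D1_def QQ_def p by force
  next
    case False
    have Nu: "None \<in> u" and fu: "finite u" using cond unfolding is_cond_tuple by blast+
    then have "s \<noteq> None" using False by (metis ht_None)
    then obtain \<alpha> k where sk: "s = Some (\<alpha>, k)" by (cases s) auto
    obtain n where wn: "Some (\<alpha>, n) \<notin> u" using fresh_name[OF fu] by blast
    obtain col1 where c1: "is_cond T (insert (Some (\<alpha>, n)) u, v, ins_lt l (Some (\<alpha>, n)) None {}, col1)"
      "cle (u,v,l,col) (insert (Some (\<alpha>, n)) u, v, ins_lt l (Some (\<alpha>, n)) None {}, col1)"
      using add_leaf[OF cond wn] by blast
    obtain col2 where c2: "is_cond T (insert (Some (\<alpha>, n)) u, insert s v, ins_lt l (Some (\<alpha>, n)) None {}, col2)"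
      "cle (insert (Some (\<alpha>, n)) u, v, ins_lt l (Some (\<alpha>, n)) None {}, col1) (insert (Some (\<alpha>, n)) u, insert s v, ins_lt l (Some (\<alpha>, n)) None {}, col2)"
      using add_v[OF c1(1) s, of "Some (\<alpha>, n)"] sk by auto
    have "cle p (insert (Some (\<alpha>, n)) u, insert s v, ins_lt l (Some (\<alpha>, n)) None {}, col2)"
      using cle_trans[OF c1(2) c2(2)] p by simp
    then show ?thesis using c2(1) unfolding D1_def QQ_def by force
  qed
qed

lemma has_x:
  fixes T :: "'o::wellorder node set \<times> ('o node \<Rightarrow> 'o node \<Rightarrow> bool)"
  assumes "is_cond T p" shows "\<exists>q. is_cond T q \<and> cle p q \<and> x \<in> c_u q"
proof (cases "x \<in> c_u p")
  case True then show ?thesis using assms cle_refl by blast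
next
  case False
  obtain u v l col where p: "p = (u,v,l,col)" by (cases p) auto
  have cond: "is_cond T (u,v,l,col)" using assms p by simp
  have "None \<in> u" using cond unfolding is_cond_tuple by blast
  have xu: "x \<notin> u" using False p by simp
  have "x \<noteq> None"
  proof
    assume "x = None" then show False using xu \<open>None \<in> u\<close> by simp
  qed
  note this xu
  then show ?thesis using add_leaf[OF cond] p by fastforce
qed

lemma has_pred:
  fixes T :: "'o::wellorder node set \<times> ('o node \<Rightarrow> 'o node \<Rightarrow> bool)"
  assumes cond: "is_cond T (u,v,l,col)" and xu: "x \<in> u" and xb: "Some \<beta> < ht x"
  shows "\<exists>q. is_cond T q \<and> cle (u,v,l,col) q \<and> x \<in> c_u q \<and> (\<exists>y. c_lt q y x \<and> ht y = Some \<beta>)"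
proof (cases "\<exists>y. l y x \<and> ht y = Some \<beta>")
  case True then show ?thesis using cond cle_refl xu by fastforce
next
  case False
  have fu: "finite u" and Nu: "None \<in> u" and tree: "tree_on u l None"
    and htl: "\<And>a b. l a b \<Longrightarrow> ht a < ht b"
    and mt: "\<And>a b. a\<in>u \<Longrightarrow> b\<in>u \<Longrightarrow> a \<noteq> b \<Longrightarrow> (\<exists>z\<in>u. is_meet l a b z)"
    using cond unfolding is_cond_tuple by blast+
  note fl1 = tree_onD(2)[OF tree] and fl2 = tree_onD(3)[OF tree] and irr = tree_onD(4)[OF tree]
   and tr = tree_onD(5)[OF tree] and lin = tree_onD(6)[OF tree] and rt = tree_onD(7)[OF tree]
  have irrA: "\<forall>a. \<not> l a a" using irr by blast
  have trA: "\<forall>a b c. l a b \<longrightarrow> l b c \<longrightarrow> l a c" using tr by blast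
  have htq: "tleq l a b \<Longrightarrow> ht a \<le> ht b" for a b using htl unfolding tleq_def by fastforce
  define P where "P = {y. tleq l y x}"
  have Pu: "P \<subseteq> u" unfolding P_def tleq_def using xu fl1 by blast
  have fP: "finite P" using Pu fu finite_subset by blast
  have Pne: "y \<in> P \<Longrightarrow> ht y \<noteq> Some \<beta>" for y
    using False xb unfolding P_def tleq_def by auto
  have Pcmp: "y1 = y2 \<or> l y1 y2 \<or> l y2 y1" if "y1 \<in> P" "y2 \<in> P" for y1 y2
    using that lin[OF xu] unfolding P_def tleq_def by blast
  have xN: "x \<noteq> None"
  proof
    assume "x = None" then show False using xb by simp
  qed
  define A where "A = {y \<in> P. ht y < Some \<beta>}"
  have NA: "None \<in> A" unfolding A_def P_def tleq_def using rt[OF xu xN] by simp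
  obtain a where aA: "a \<in> A" and amax: "\<forall>y\<in>A. ht y \<le> ht a"
    using ex_max_on[of A ht] NA fP unfolding A_def by (metis (no_types, lifting) empty_iff finite_subset mem_Collect_eq subsetI)
  define Bs where "Bs = {y \<in> P. Some \<beta> < ht y}"
  have xBs: "x \<in> Bs" unfolding Bs_def P_def using xb by simp
  obtain b where bB: "b \<in> Bs" and bmin: "\<forall>y\<in>Bs. ht b \<le> ht y"
    using ex_min_on[of Bs ht] xBs fP unfolding Bs_def by (metis (no_types, lifting) empty_iff finite_subset mem_Collect_eq subsetI)
  have aP: "a \<in> P" and ha: "ht a < Some \<beta>" using aA unfolding A_def by auto
  have bP: "b \<in> P" and hb: "Some \<beta> < ht b" using bB unfolding Bs_def by auto
  have lab: "l a b"
  proof -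
    have "a \<noteq> b" using ha hb by auto
    moreover have "\<not> l b a" using htl ha hb by fastforce
    ultimately show ?thesis using Pcmp[OF aP bP] by blast
  qed
  have au: "a \<in> u" and bu: "b \<in> u" using aP bP Pu by blast+
  have between: "tleq l y a" if ly: "l y b" for y
  proof -
    have yP: "y \<in> P" using ly bP tr unfolding P_def tleq_def by blast
    have "\<not> l a y"
    proof
      assume lay: "l a y"
      have h1: "ht a < ht y" "ht y < ht b" using htl lay ly by blast+
      have "ht y \<noteq> Some \<beta>" using Pne yP by blast
      then have "ht y < Some \<beta> \<or> Some \<beta> < ht y" by auto
      then show False
      proof
        assume "ht y < Some \<beta>" then have "y \<in> A" unfolding A_def using yP by blast
        then show False using amax h1 by fastforce
      next
        assume "Some \<beta> < ht y" then have "y \<in> Bs" unfolding Bs_def using yP by blast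
        then show False using bmin h1 by fastforce
      qed
    qed
    then show ?thesis using Pcmp[OF yP aP] unfolding tleq_def by blast
  qed
  define B where "B = {z. tleq l b z}"
  have B1: "B \<subseteq> u" unfolding B_def tleq_def using bu fl2 by blast
  obtain n where wn: "Some (\<beta>, n) \<notin> u" using fresh_name[OF fu] by blast
  define w where "w = Some (\<beta>, n)"
  have B2: "l a z \<and> ht w < ht z" if "z \<in> B" for z
  proof -
    have "tleq l b z" using that unfolding B_def by blast
    then show ?thesis using lab tr htq[of b z] hb unfolding tleq_def w_def by auto
  qed
  have B3: "y \<in> B \<or> tleq l y a" if zB: "z \<in> B" and lyz: "l y z" for z y
  proof -
    have bz: "tleq l b z" using zB unfolding B_def by blast
    show ?thesis
    proof (cases "z = b")
      case True then show ?thesis using between lyz by blast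
    next
      case False
      then have "l b z" using bz unfolding tleq_def by blast
      moreover have zu: "z \<in> u" using zB B1 by blast
      ultimately have "y = b \<or> l y b \<or> l b y" using lin[OF zu lyz] by blast
      then show ?thesis using between unfolding B_def tleq_def by blast
    qed
  qed
  have B4: "z' \<in> B" if "z \<in> B" "l z z'" for z z'
    using that tr unfolding B_def tleq_def by blast
  have B5: "tmeet l z1 z2 \<in> B" if hz: "z1 \<in> B" "z2 \<in> B" "z1 \<noteq> z2" for z1 z2
  proof -
    have zu: "z1 \<in> u" "z2 \<in> u" using hz B1 by blast+
    obtain m where m: "m \<in> u" "is_meet l z1 z2 m" using mt[OF zu hz(3)] by blast
    have "tmeet l z1 z2 = m" using tmeet_eqH[OF irrA trA m(2)] .
    moreover have "tleq l b m" using m(2) hz(1,2) unfolding B_def is_meet_def by blast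
    ultimately show ?thesis unfolding B_def by simp
  qed
  have wu: "w \<notin> u" "w \<noteq> None" using wn unfolding w_def by auto
  have haw: "ht a < ht w" using ha unfolding w_def by simp
  have "\<exists>col'. is_cond T (insert w u, v, ins_lt l w a B, col') \<and> cle (u,v,l,col) (insert w u, v, ins_lt l w a B, col')"
    apply (rule insert_node[OF cond wu au haw B1])
    using B2 apply blast
    using B3 apply blast
    using B4 apply blast
    using B5 apply blast
    done
  then obtain col' where c: "is_cond T (insert w u, v, ins_lt l w a B, col')" "cle (u,v,l,col) (insert w u, v, ins_lt l w a B, col')"
    by blast
  have "x \<in> B" using bP unfolding B_def P_def by simp
  then have "ins_lt l w a B w x" unfolding ins_lt_def by simp
  moreover have "ht w = Some \<beta>" unfolding w_def by simp
  ultimately show ?thesis using c xu by fastforce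
qed

lemma dense_D3:
  fixes T :: "'o::wellorder node set \<times> ('o node \<Rightarrow> 'o node \<Rightarrow> bool)"
  shows "dense_in (QQ T) (D3 T x \<beta>)"
  unfolding dense_in_def
proof (intro conjI ballI)
  show "D3 T x \<beta> \<subseteq> QQ T" unfolding D3_def by blast
  fix p assume "p \<in> QQ T"
  then have pc: "is_cond T p" unfolding QQ_def by blast
  obtain q where q: "is_cond T q" "cle p q" "x \<in> c_u q" using has_x[OF pc] by blast
  show "\<exists>r\<in>D3 T x \<beta>. cle p r"
  proof (cases "Some \<beta> < ht x")
    case False then show ?thesis using q unfolding D3_def QQ_def by blast
  next
    case True
    obtain u v l col where qq: "q = (u,v,l,col)" by (cases q) auto
    obtain r where r: "is_cond T r" "cle q r" "x \<in> c_u r" "\<exists>y. c_lt r y x \<and> ht y = Some \<beta>"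
      using has_pred[of T u v l col x \<beta>] q True qq by force
    then show ?thesis using cle_trans[OF q(2) r(2)] unfolding D3_def QQ_def by blast
  qed
qed

lemma condD:
  assumes "is_cond T p"
  shows "tree_on (c_u p) (c_lt p) None" "\<And>a b. c_lt p a b \<Longrightarrow> ht a < ht b"
    "\<And>a b. a \<in> c_u p \<Longrightarrow> b \<in> c_u p \<Longrightarrow> a \<noteq> b \<Longrightarrow> \<exists>z\<in>c_u p. is_meet (c_lt p) a b z"
    "dom (c_col p) = limit_pairs (c_u p) (c_v p)" "spec_col (c_lt p) (snd T) (c_col p)"
    "c_v p \<subseteq> fst T" "None \<in> c_u p"
  using assms unfolding is_cond_def by blast+

lemma cond_meet:
  assumes "is_cond T p" "x \<in> c_u p" "y \<in> c_u p" "x \<noteq> y"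
  shows "is_meet (c_lt p) x y (tmeet (c_lt p) x y) \<and> tmeet (c_lt p) x y \<in> c_u p"
proof -
  note tr = condD(1)[OF assms(1)]
  have irrA: "\<forall>a. \<not> c_lt p a a" using tree_onD(4)[OF tr] by blast
  have trA: "\<forall>a b c. c_lt p a b \<longrightarrow> c_lt p b c \<longrightarrow> c_lt p a c" using tree_onD(5)[OF tr] by blast
  obtain m where m: "m \<in> c_u p" "is_meet (c_lt p) x y m" using condD(3)[OF assms(1-4)] by blast
  have "tmeet (c_lt p) x y = m" using tmeet_eqH[OF irrA trA m(2)] .
  then show ?thesis using m by simp
qed

lemma cle_restrict:
  assumes p: "is_cond T p" and r: "is_cond T r" and pr: "cle p r"
    and ab: "a \<in> c_u p" "b \<in> c_u p" and lr: "c_lt r a b"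
  shows "c_lt p a b"
proof -
  note trr = condD(1)[OF r]
  have irrA: "\<forall>a. \<not> c_lt r a a" using tree_onD(4)[OF trr] by blast
  have trA: "\<forall>a b c. c_lt r a b \<longrightarrow> c_lt r b c \<longrightarrow> c_lt r a c" using tree_onD(5)[OF trr] by blast
  have ne: "a \<noteq> b" using lr irrA by blast
  have "is_meet (c_lt r) a b a" unfolding is_meet_def tleq_def using lr by blast
  then have t1: "tmeet (c_lt r) a b = a" using tmeet_eqH[OF irrA trA] by blast
  have "tmeet (c_lt r) a b = tmeet (c_lt p) a b" using pr ab ne unfolding cle_def by blast
  then have "tmeet (c_lt p) a b = a" using t1 by simp
  then have "tleq (c_lt p) a b" using cond_meet[OF p ab ne] unfolding is_meet_def by simp
  then show ?thesis using ne unfolding tleq_def by blast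
qed

lemma cle_u: "cle p q \<Longrightarrow> c_u p \<subseteq> c_u q" unfolding cle_def by blast
lemma cle_v: "cle p q \<Longrightarrow> c_v p \<subseteq> c_v q" unfolding cle_def by blast
lemma cle_l: "cle p q \<Longrightarrow> c_lt p a b \<Longrightarrow> c_lt q a b" unfolding cle_def by blast
lemma cle_c: "cle p q \<Longrightarrow> c_col p \<subseteq>\<^sub>m c_col q" unfolding cle_def by blast
lemma cle_m: "cle p q \<Longrightarrow> a \<in> c_u p \<Longrightarrow> b \<in> c_u p \<Longrightarrow> a \<noteq> b \<Longrightarrow> tmeet (c_lt q) a b = tmeet (c_lt p) a b"
  unfolding cle_def by blast

lemma htS_notNone: "ht y = Some \<beta> \<Longrightarrow> y \<noteq> None" by (cases y) auto
lemma notNone: "Some \<gamma> < ht x \<Longrightarrow> x \<noteq> None" by (cases x) auto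

locale gen =
  fixes S :: "'o::wellorder node set" and lt :: "'o node \<Rightarrow> 'o node \<Rightarrow> bool" and G :: "'o cond set"
  assumes TA: "in_A (S, lt)"
   and G: "filter_in (QQ (S,lt)) G"
   and m1: "\<And>s. s\<in>S \<Longrightarrow> G \<inter> D1 (S,lt) s \<noteq> {}"
   and m3: "\<And>x \<beta>. G \<inter> D3 (S,lt) x \<beta> \<noteq> {}"
begin

definition Lr :: "'o node \<Rightarrow> 'o node \<Rightarrow> bool" where "Lr x y = (\<exists>p\<in>G. c_lt p x y)"

lemma Gc: "p \<in> G \<Longrightarrow> is_cond (S,lt) p" using G unfolding filter_in_def QQ_def by blast
lemma dir: "p \<in> G \<Longrightarrow> q \<in> G \<Longrightarrow> \<exists>r\<in>G. cle p r \<and> cle q r" using G unfolding filter_in_def by blast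
lemma Gne: "G \<noteq> {}" using G unfolding filter_in_def by blast

lemma inU: "\<exists>p\<in>G. x \<in> c_u p"
proof -
  obtain p where "p \<in> G" "p \<in> D3 (S,lt) x undefined" using m3[of x undefined] by blast
  then show ?thesis unfolding D3_def by blast
qed

lemma ext_x: assumes "p \<in> G" shows "\<exists>r\<in>G. cle p r \<and> x \<in> c_u r"
proof -
  obtain q where q: "q \<in> G" "x \<in> c_u q" using inU by blast
  obtain r where "r \<in> G" "cle p r" "cle q r" using dir[OF assms q(1)] by blast
  then show ?thesis using q(2) cle_u by blast
qed

lemma two: "\<exists>p\<in>G. x \<in> c_u p \<and> y \<in> c_u p"
proof -
  obtain p where p: "p \<in> G" "x \<in> c_u p" using inU by blast
  obtain r where "r \<in> G" "cle p r" "y \<in> c_u r" using ext_x[OF p(1)] by blast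
  then show ?thesis using p(2) cle_u by blast
qed

lemma LG: assumes p: "p \<in> G" and ab: "a \<in> c_u p" "b \<in> c_u p" shows "Lr a b \<longleftrightarrow> c_lt p a b"
proof
  assume "Lr a b"
  then obtain q where q: "q \<in> G" "c_lt q a b" unfolding Lr_def by blast
  obtain r where r: "r \<in> G" "cle p r" "cle q r" using dir[OF p q(1)] by blast
  have "c_lt r a b" using q(2) r(3) cle_l by blast
  then show "c_lt p a b" using cle_restrict[OF Gc[OF p] Gc[OF r(1)] r(2) ab] by blast
next
  assume "c_lt p a b" then show "Lr a b" unfolding Lr_def using p by blast
qed

lemma tleqG: assumes p: "p \<in> G" and ab: "a \<in> c_u p" "b \<in> c_u p" shows "tleq Lr a b \<longleftrightarrow> tleq (c_lt p) a b"
  using LG[OF assms] unfolding tleq_def by blast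

lemma Lht: "Lr x y \<Longrightarrow> ht x < ht y"
  unfolding Lr_def using condD(2)[OF Gc] by blast

lemma Lirr: "\<not> Lr x x" using Lht by blast

lemma Ltr: assumes "Lr x y" "Lr y z" shows "Lr x z"
proof -
  obtain p q where pq: "p \<in> G" "c_lt p x y" "q \<in> G" "c_lt q y z" using assms unfolding Lr_def by blast
  obtain r where r: "r \<in> G" "cle p r" "cle q r" using dir[OF pq(1,3)] by blast
  have "c_lt r x y" "c_lt r y z" using pq r cle_l by blast+
  then have "c_lt r x z" using tree_onD(5)[OF condD(1)[OF Gc[OF r(1)]]] by blast
  then show ?thesis unfolding Lr_def using r(1) by blast
qed

lemma Llin: assumes "Lr y x" "Lr z x" shows "y = z \<or> Lr y z \<or> Lr z y"
proof -
  obtain p q where pq: "p \<in> G" "c_lt p y x" "q \<in> G" "c_lt q z x" using assms unfolding Lr_def by blast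
  obtain r where r: "r \<in> G" "cle p r" "cle q r" using dir[OF pq(1,3)] by blast
  have h: "c_lt r y x" "c_lt r z x" using pq r cle_l by blast+
  note tr = condD(1)[OF Gc[OF r(1)]]
  have "x \<in> c_u r" using tree_onD(3)[OF tr h(1)] .
  then have "y = z \<or> c_lt r y z \<or> c_lt r z y" using tree_onD(6)[OF tr] h by blast
  then show ?thesis unfolding Lr_def using r(1) by blast
qed

lemma Lrt: assumes "x \<noteq> None" shows "Lr None x"
proof -
  obtain p where p: "p \<in> G" "x \<in> c_u p" using inU by blast
  then have "c_lt p None x" using tree_onD(7)[OF condD(1)[OF Gc[OF p(1)]]] assms by blast
  then show ?thesis unfolding Lr_def using p(1) by blast
qed

lemma LirrA: "\<forall>a. \<not> Lr a a" using Lirr by blast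
lemma LtrA: "\<forall>a b c. Lr a b \<longrightarrow> Lr b c \<longrightarrow> Lr a c" using Ltr by blast

lemma meetG:
  assumes p: "p \<in> G" and xy: "x \<in> c_u p" "y \<in> c_u p" "x \<noteq> y"
  shows "is_meet Lr x y (tmeet (c_lt p) x y) \<and> tmeet Lr x y = tmeet (c_lt p) x y"
proof -
  define m where "m = tmeet (c_lt p) x y"
  have mp: "is_meet (c_lt p) x y m" "m \<in> c_u p" using cond_meet[OF Gc[OF p] xy] unfolding m_def by blast+
  have "is_meet Lr x y m"
    unfolding is_meet_def
  proof (intro conjI allI impI)
    show "tleq Lr m x" "tleq Lr m y" using mp tleqG[OF p] xy unfolding is_meet_def by blast+
    fix z assume hz: "tleq Lr z x \<and> tleq Lr z y"
    obtain r where r: "r \<in> G" "cle p r" "z \<in> c_u r" using ext_x[OF p] by blast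
    have xyr: "x \<in> c_u r" "y \<in> c_u r" using xy r(2) cle_u by blast+
    have "tleq (c_lt r) z x" "tleq (c_lt r) z y" using hz tleqG[OF r(1)] xyr r(3) by blast+
    moreover have "tmeet (c_lt r) x y = m" using cle_m[OF r(2) xy] m_def by simp
    moreover have "is_meet (c_lt r) x y (tmeet (c_lt r) x y)" using cond_meet[OF Gc[OF r(1)] xyr xy(3)] by blast
    ultimately have "tleq (c_lt r) z m" unfolding is_meet_def by blast
    moreover have "m \<in> c_u r" using mp(2) r(2) cle_u by blast
    ultimately show "tleq Lr z m" using tleqG[OF r(1)] r(3) by blast
  qed
  moreover then have "tmeet Lr x y = m" using tmeet_eqH[OF LirrA LtrA] by blast
  ultimately show ?thesis unfolding m_def by simp
qed

lemma Ueq: "(\<Union>p\<in>G. c_u p) = UNIV" using inU by blast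

lemma level: assumes "x \<noteq> None"
  shows "ht ` {y. Lr y x \<and> y \<noteq> None} = {Some \<beta> | \<beta>. Some \<beta> < ht x}"
proof
  show "ht ` {y. Lr y x \<and> y \<noteq> None} \<subseteq> {Some \<beta> | \<beta>. Some \<beta> < ht x}"
  proof
    fix h assume "h \<in> ht ` {y. Lr y x \<and> y \<noteq> None}"
    then obtain y where y: "Lr y x" "y \<noteq> None" "h = ht y" by blast
    then obtain \<alpha> n where yy: "y = Some (\<alpha>, n)" by (cases y) auto
    have "ht y < ht x" using Lht y(1) by blast
    then show "h \<in> {Some \<beta> | \<beta>. Some \<beta> < ht x}" using y(3) yy by auto
  qed
  show "{Some \<beta> | \<beta>. Some \<beta> < ht x} \<subseteq> ht ` {y. Lr y x \<and> y \<noteq> None}"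
  proof
    fix h assume "h \<in> {Some \<beta> | \<beta>. Some \<beta> < ht x}"
    then obtain \<beta> where b: "h = Some \<beta>" "Some \<beta> < ht x" by blast
    obtain p where p: "p \<in> G" "p \<in> D3 (S,lt) x \<beta>" using m3[of x \<beta>] by blast
    then obtain y where y: "c_lt p y x" "ht y = Some \<beta>" using b(2) unfolding D3_def by blast
    then have "Lr y x" unfolding Lr_def using p(1) by blast
    moreover have "y \<noteq> None" using y(2) by (rule htS_notNone)
    ultimately show "h \<in> ht ` {y. Lr y x \<and> y \<noteq> None}" using y(2) b(1) by force
  qed
qed

lemma level_ex: assumes "Some \<gamma> < ht x" shows "\<exists>z. Lr z x \<and> ht z = Some \<gamma>"
proof -
  have "x \<noteq> None" using assms by (rule notNone)
  then have "Some \<gamma> \<in> ht ` {y. Lr y x \<and> y \<noteq> None}" using level assms by blast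
  then obtain z where "z \<in> {y. Lr y x \<and> y \<noteq> None}" "Some \<gamma> = ht z" by (rule imageE)
  then show ?thesis by auto
qed

lemma normal:
  assumes ne: "x \<noteq> y" and hxy: "ht x = ht y" and lim: "limit_ht x"
  shows "{z. Lr z x} \<noteq> {z. Lr z y}"
proof
  assume eq: "{z. Lr z x} = {z. Lr z y}"
  obtain p where p: "p \<in> G" "x \<in> c_u p" "y \<in> c_u p" using two by blast
  define m where "m = tmeet (c_lt p) x y"
  have mm: "is_meet Lr x y m" using meetG[OF p ne] m_def by blast
  have "ht m < ht x"
  proof -
    have "tleq Lr m x" using mm unfolding is_meet_def by blast
    moreover have "m \<noteq> x"
    proof
      assume "m = x"
      then have "tleq Lr x y" using mm unfolding is_meet_def by blast
      then show False using ne hxy Lht unfolding tleq_def by fastforce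
    qed
    ultimately show ?thesis using Lht unfolding tleq_def by blast
  qed
  obtain \<delta> where d: "ht x = Some \<delta>" "is_limit \<delta>" using lim unfolding limit_ht_def by blast
  obtain \<gamma> where g: "ht m < Some \<gamma>" "\<gamma> < \<delta>"
  proof (cases "ht m")
    case None
    obtain \<beta> where "\<beta> < \<delta>" using d(2) unfolding is_limit_def by blast
    then show ?thesis using that None by simp
  next
    case (Some \<mu>)
    then have "\<mu> < \<delta>" using \<open>ht m < ht x\<close> d(1) by simp
    then obtain \<gamma> where "\<mu> < \<gamma>" "\<gamma> < \<delta>" using d(2) unfolding is_limit_def by blast
    then show ?thesis using that Some by simp
  qed
  obtain z where z: "Lr z x" "ht z = Some \<gamma>" using level_ex[of \<gamma> x] g(2) d(1) by auto
  then have "Lr z y" using eq by blast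
  then have "tleq Lr z m" using mm z(1) unfolding is_meet_def tleq_def by blast
  then have "ht z \<le> ht m" using Lht unfolding tleq_def by fastforce
  then show False using g(1) z(2) by simp
qed

end

lemma bound_countable:
  fixes X :: "'o::wellorder set"
  assumes unc: "uncountable (UNIV :: 'o set)" and cnt: "\<forall>\<alpha>::'o. countable {\<beta>. \<beta> < \<alpha>}" and X: "countable X"
  shows "\<exists>\<gamma>. \<forall>x\<in>X. x < \<gamma>"
proof -
  have "countable (\<Union>x\<in>X. {\<beta>. \<beta> \<le> x})"
  proof (rule countable_UN[OF X])
    fix x :: 'o
    have "{\<beta>. \<beta> \<le> x} = insert x {\<beta>. \<beta> < x}" by auto
    then show "countable {\<beta>. \<beta> \<le> x}" using cnt by simp
  qed
  then have "(\<Union>x\<in>X. {\<beta>. \<beta> \<le> x}) \<noteq> UNIV" using unc by auto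
  then obtain \<gamma> where "\<gamma> \<notin> (\<Union>x\<in>X. {\<beta>. \<beta> \<le> x})" by blast
  then have "\<forall>x\<in>X. x < \<gamma>" by (auto simp: not_le)
  then show ?thesis by blast
qed

lemma limits_uncountable:
  assumes unc: "uncountable (UNIV :: 'o::wellorder set)" and cnt: "\<forall>\<alpha>::'o. countable {\<beta>. \<beta> < \<alpha>}"
  shows "uncountable {\<delta>::'o. is_limit \<delta>}"
proof
  assume cL: "countable {\<delta>::'o. is_limit \<delta>}"
  obtain \<gamma>0 :: 'o where g0: "\<forall>x\<in>{\<delta>. is_limit \<delta>}. x < \<gamma>0" using bound_countable[OF unc cnt cL] by blast
  define sc :: "'o \<Rightarrow> 'o" where "sc \<alpha> = (LEAST \<beta>. \<alpha> < \<beta>)" for \<alpha>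
  have scgt: "\<alpha> < sc \<alpha>" for \<alpha>
  proof -
    obtain \<gamma> where "\<forall>x\<in>{\<alpha>}. x < \<gamma>" using bound_countable[OF unc cnt, of "{\<alpha>}"] by auto
    then have "\<alpha> < \<gamma>" by simp
    then show ?thesis unfolding sc_def by (rule LeastI)
  qed
  define s where "s n = (sc ^^ n) \<gamma>0" for n
  have sS: "s (Suc n) = sc (s n)" for n by (simp add: s_def)
  obtain \<zeta>1 where z1: "\<forall>x\<in>range s. x < \<zeta>1" using bound_countable[OF unc cnt, of "range s"] by auto
  define \<zeta> where "\<zeta> = (LEAST \<zeta>. \<forall>n. s n < \<zeta>)"
  have zP: "\<forall>n. s n < \<zeta>" unfolding \<zeta>_def by (rule LeastI[of _ \<zeta>1]) (use z1 in auto)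
  have lim: "is_limit \<zeta>"
    unfolding is_limit_def
  proof (intro conjI allI impI)
    show "\<exists>\<beta>. \<beta> < \<zeta>" using zP by blast
    fix \<beta> assume "\<beta> < \<zeta>"
    then have "\<not> (\<forall>n. s n < \<beta>)" unfolding \<zeta>_def using not_less_Least by blast
    then obtain n where "\<beta> \<le> s n" by (auto simp: not_less)
    then have "\<beta> < s (Suc n)" using scgt[of "s n"] sS[of n] by simp
    then show "\<exists>\<gamma>. \<beta> < \<gamma> \<and> \<gamma> < \<zeta>" using zP by blast
  qed
  then have "\<zeta> < \<gamma>0" using g0 by blast
  moreover have "\<gamma>0 < \<zeta>" using zP s_def by (metis funpow_0)
  ultimately show False by simp
qed

context gen begin

definition cc :: "'o node \<times> 'o node \<rightharpoonup> nat" where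
  "cc k = (if \<exists>p\<in>G. k \<in> dom (c_col p) then c_col (SOME p. p \<in> G \<and> k \<in> dom (c_col p)) k else None)"

lemma colcomp: assumes "p \<in> G" "q \<in> G" "k \<in> dom (c_col p)" "k \<in> dom (c_col q)"
  shows "c_col p k = c_col q k"
proof -
  obtain r where r: "r \<in> G" "cle p r" "cle q r" using dir[OF assms(1,2)] by blast
  have "c_col p k = c_col r k" using cle_c[OF r(2)] assms(3) unfolding map_le_def by blast
  moreover have "c_col q k = c_col r k" using cle_c[OF r(3)] assms(4) unfolding map_le_def by blast
  ultimately show ?thesis by simp
qed

lemma cc_iff: "cc k = Some n \<longleftrightarrow> (\<exists>p\<in>G. c_col p k = Some n)"
proof
  assume h: "cc k = Some n"
  then have ex: "\<exists>p\<in>G. k \<in> dom (c_col p)" unfolding cc_def by (auto split: if_splits)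
  define p0 where "p0 = (SOME p. p \<in> G \<and> k \<in> dom (c_col p))"
  have "p0 \<in> G \<and> k \<in> dom (c_col p0)" unfolding p0_def using ex someI_ex[of "\<lambda>p. p \<in> G \<and> k \<in> dom (c_col p)"] by blast
  moreover have "c_col p0 k = Some n" using h ex unfolding cc_def p0_def by simp
  ultimately show "\<exists>p\<in>G. c_col p k = Some n" by blast
next
  assume "\<exists>p\<in>G. c_col p k = Some n"
  then obtain p where p: "p \<in> G" "c_col p k = Some n" by blast
  then have ex: "\<exists>p\<in>G. k \<in> dom (c_col p)" by blast
  define p0 where "p0 = (SOME p. p \<in> G \<and> k \<in> dom (c_col p))"
  have p0: "p0 \<in> G \<and> k \<in> dom (c_col p0)" unfolding p0_def using ex someI_ex[of "\<lambda>p. p \<in> G \<and> k \<in> dom (c_col p)"] by blast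
  have "c_col p0 k = c_col p k" using colcomp p0 p by blast
  then show "cc k = Some n" using ex p(2) unfolding cc_def p0_def by simp
qed

lemma graph_cc: "Map.graph cc = (\<Union>p\<in>G. Map.graph (c_col p))"
  unfolding Map.graph_def using cc_iff by auto

lemma dom_cc: "dom cc = limit_pairs UNIV S"
proof
  show "dom cc \<subseteq> limit_pairs UNIV S"
  proof
    fix k assume "k \<in> dom cc"
    then obtain n where "cc k = Some n" by blast
    then obtain p where p: "p \<in> G" "c_col p k = Some n" using cc_iff by blast
    then have "k \<in> limit_pairs (c_u p) (c_v p)" using condD(4)[OF Gc[OF p(1)]] by blast
    moreover have "c_v p \<subseteq> S" using condD(6)[OF Gc[OF p(1)]] by simp
    ultimately show "k \<in> limit_pairs UNIV S" unfolding limit_pairs_def by blast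
  qed
  show "limit_pairs UNIV S \<subseteq> dom cc"
  proof
    fix k assume k: "k \<in> limit_pairs UNIV S"
    then obtain x y where xy: "k = (x,y)" "y \<in> S" "ht x = ht y" "limit_ht x" unfolding limit_pairs_def by blast
    obtain q where q: "q \<in> G" "q \<in> D1 (S,lt) y" using m1[OF xy(2)] by blast
    then have yq: "y \<in> c_v q" unfolding D1_def by blast
    obtain r where r: "r \<in> G" "cle q r" "x \<in> c_u r" using ext_x[OF q(1)] by blast
    have "y \<in> c_v r" using yq cle_v[OF r(2)] by blast
    then have "k \<in> dom (c_col r)" using condD(4)[OF Gc[OF r(1)]] r(3) xy unfolding limit_pairs_def by blast
    then obtain n where "c_col r k = Some n" by blast
    then have "cc k = Some n" using cc_iff r(1) by blast
    then show "k \<in> dom cc" by blast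
  qed
qed

lemma spec_cc: "spec_col Lr lt cc"
  unfolding spec_col_def
proof (intro allI impI)
  fix x1 y1 x2 y2
  assume h: "(x1, y1) \<in> dom cc" "(x2, y2) \<in> dom cc" "(x1, y1) \<noteq> (x2, y2)" "cc (x1, y1) = cc (x2, y2)"
  obtain n where n1: "cc (x1,y1) = Some n" using h(1) by blast
  then have n2: "cc (x2,y2) = Some n" using h(4) by simp
  obtain p1 where p1: "p1 \<in> G" "c_col p1 (x1,y1) = Some n" using n1 cc_iff by blast
  obtain p2 where p2: "p2 \<in> G" "c_col p2 (x2,y2) = Some n" using n2 cc_iff by blast
  obtain r where r: "r \<in> G" "cle p1 r" "cle p2 r" using dir[OF p1(1) p2(1)] by blast
  have r1: "c_col r (x1,y1) = Some n" using cle_c[OF r(2)] p1(2) unfolding map_le_def by (metis domI)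
  have r2: "c_col r (x2,y2) = Some n" using cle_c[OF r(3)] p2(2) unfolding map_le_def by (metis domI)
  have d: "(x1,y1) \<in> dom (c_col r)" "(x2,y2) \<in> dom (c_col r)" using r1 r2 by blast+
  have sc: "spec_col (c_lt r) lt (c_col r)" using condD(5)[OF Gc[OF r(1)]] by simp
  have res: "ht x1 \<noteq> ht x2 \<and> perp (c_lt r) x1 x2 \<and> perp lt y1 y2 \<and> ht (tmeet (c_lt r) x1 x2) > ht (tmeet lt y1 y2)"
    using sc d h(3) r1 r2 unfolding spec_col_def by metis
  have xu: "x1 \<in> c_u r" "x2 \<in> c_u r" using d condD(4)[OF Gc[OF r(1)]] unfolding limit_pairs_def by blast+
  have ne: "x1 \<noteq> x2" using res by blast
  have "perp Lr x1 x2" using res tleqG[OF r(1)] xu unfolding perp_def by blast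
  moreover have "tmeet Lr x1 x2 = tmeet (c_lt r) x1 x2" using meetG[OF r(1) xu ne] by blast
  ultimately show "ht x1 \<noteq> ht x2 \<and> perp Lr x1 x2 \<and> perp lt y1 y2 \<and> ht (tmeet Lr x1 x2) > ht (tmeet lt y1 y2)"
    using res by simp
qed

end

context gen begin

lemma branch_countable:
  assumes unc: "uncountable (UNIV::'o set)" and cnt: "\<forall>\<alpha>::'o. countable {\<beta>. \<beta> < \<alpha>}"
   and B: "is_branch UNIV Lr B"
  shows "countable B"
proof (rule ccontr)
  assume ncB: "\<not> countable B"
  have ch: "\<And>x y. x \<in> B \<Longrightarrow> y \<in> B \<Longrightarrow> tleq Lr x y \<or> tleq Lr y x"
    using B unfolding is_branch_def is_chain_def by blast
  have mx: "\<And>C. B \<subseteq> C \<Longrightarrow> is_chain Lr C \<Longrightarrow> C = B"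
    using B unfolding is_branch_def by blast
  have down: "y \<in> B" if xB: "x \<in> B" and lyx: "Lr y x" for x y
  proof -
    have yz: "tleq Lr y z \<or> tleq Lr z y" if zB: "z \<in> B" for z
    proof -
      have "tleq Lr z x \<or> tleq Lr x z" using ch[OF zB xB] .
      then show ?thesis
      proof
        assume "tleq Lr x z"
        then have "Lr y z" using lyx Ltr unfolding tleq_def by blast
        then show ?thesis unfolding tleq_def by blast
      next
        assume "tleq Lr z x"
        then have "z = x \<or> Lr z x" unfolding tleq_def by blast
        then show ?thesis
        proof
          assume "z = x" then show ?thesis using lyx unfolding tleq_def by blast
        next
          assume "Lr z x" then show ?thesis using Llin[OF lyx] unfolding tleq_def by blast
        qed
      qed
    qed
    have "is_chain Lr (insert y B)"
      unfolding is_chain_def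
    proof (intro ballI)
      fix a b assume a: "a \<in> insert y B" and b: "b \<in> insert y B"
      show "tleq Lr a b \<or> tleq Lr b a"
      proof (cases "a = y")
        case True
        show ?thesis
        proof (cases "b = y")
          case True then show ?thesis using \<open>a = y\<close> by simp
        next
          case False then show ?thesis using yz[of b] b True by blast
        qed
      next
        case False
        then have aB: "a \<in> B" using a by blast
        show ?thesis
        proof (cases "b = y")
          case True then show ?thesis using yz[OF aB] by blast
        next
          case False then show ?thesis using ch[OF aB] b by blast
        qed
      qed
    qed
    then have "insert y B = B" using mx by blast
    then show ?thesis by blast
  qed
  have hinj: "inj_on ht B"
  proof (rule inj_onI)
    fix x y assume h: "x \<in> B" "y \<in> B" "ht x = ht y"
    show "x = y"
    proof (rule ccontr)
      assume "x \<noteq> y"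
      then have "Lr x y \<or> Lr y x" using ch[OF h(1,2)] unfolding tleq_def by blast
      then have "ht x < ht y \<or> ht y < ht x" using Lht by blast
      then show False using h(3) by simp
    qed
  qed
  define H where "H = {\<alpha>. \<exists>x\<in>B. ht x = Some \<alpha>}"
  have allH: "\<gamma> \<in> H" for \<gamma>
  proof (rule ccontr)
    assume nH: "\<gamma> \<notin> H"
    have "H \<subseteq> {\<beta>. \<beta> < \<gamma>}"
    proof
      fix \<beta> assume "\<beta> \<in> H"
      then obtain x where x: "x \<in> B" "ht x = Some \<beta>" unfolding H_def by blast
      show "\<beta> \<in> {\<beta>. \<beta> < \<gamma>}"
      proof (rule ccontr)
        assume "\<beta> \<notin> {\<beta>. \<beta> < \<gamma>}"
        then have "\<gamma> \<le> \<beta>" by auto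
        moreover have "\<gamma> \<noteq> \<beta>" using nH x unfolding H_def by blast
        ultimately have "Some \<gamma> < ht x" using x(2) by simp
        then obtain z where z: "Lr z x" "ht z = Some \<gamma>" using level_ex by blast
        then have "z \<in> B" using down x(1) by blast
        then show False using nH z(2) unfolding H_def by blast
      qed
    qed
    moreover have "countable {\<beta>. \<beta> < \<gamma>}" using cnt by blast
    ultimately have cH: "countable H" by (rule countable_subset)
    have "ht ` B \<subseteq> insert None (Some ` H)"
    proof
      fix h assume "h \<in> ht ` B"
      then obtain x where x: "x \<in> B" "h = ht x" by blast
      show "h \<in> insert None (Some ` H)"
      proof (cases x)
        case None then show ?thesis using x by simp
      next
        case (Some xn)
        then obtain \<alpha> n where xa: "x = Some (\<alpha>, n)" by (cases xn) auto
        have hx: "ht x = Some \<alpha>" using xa by simp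
        have "\<alpha> \<in> H" unfolding H_def using x(1) hx by blast
        moreover have "h = Some \<alpha>" using x(2) xa by simp
        ultimately show ?thesis by blast
      qed
    qed
    moreover have "countable (insert None (Some ` H))" using cH by simp
    ultimately have "countable (ht ` B)" by (rule countable_subset)
    then have "countable B" using hinj by (rule countable_image_inj_on)
    then show False using ncB by blast
  qed
  have Sh: "\<forall>\<alpha>. \<exists>x\<in>S. ht x = Some \<alpha>" using TA unfolding in_A_def by simp
  define xs where "xs \<delta> = (SOME x. x \<in> B \<and> ht x = Some \<delta>)" for \<delta>
  define ys where "ys \<delta> = (SOME y. y \<in> S \<and> ht y = Some \<delta>)" for \<delta>
  have xs: "xs \<delta> \<in> B \<and> ht (xs \<delta>) = Some \<delta>" for \<delta>
  proof -
    have "\<exists>x. x \<in> B \<and> ht x = Some \<delta>" using allH[of \<delta>] unfolding H_def by blast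
    then show ?thesis unfolding xs_def by (rule someI_ex)
  qed
  have ys: "ys \<delta> \<in> S \<and> ht (ys \<delta>) = Some \<delta>" for \<delta>
  proof -
    have "\<exists>y. y \<in> S \<and> ht y = Some \<delta>" using Sh by blast
    then show ?thesis unfolding ys_def by (rule someI_ex)
  qed
  define f where "f \<delta> = the (cc (xs \<delta>, ys \<delta>))" for \<delta>
  have indom: "(xs \<delta>, ys \<delta>) \<in> dom cc" if "is_limit \<delta>" for \<delta>
    unfolding dom_cc limit_pairs_def using xs[of \<delta>] ys[of \<delta>] that unfolding limit_ht_def by auto
  have "inj_on f {\<delta>. is_limit \<delta>}"
  proof (rule inj_onI)
    fix d1 d2 assume d: "d1 \<in> {\<delta>. is_limit \<delta>}" "d2 \<in> {\<delta>. is_limit \<delta>}" "f d1 = f d2"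
    show "d1 = d2"
    proof (rule ccontr)
      assume ne: "d1 \<noteq> d2"
      have i1: "(xs d1, ys d1) \<in> dom cc" and i2: "(xs d2, ys d2) \<in> dom cc" using indom d(1,2) by auto
      have "cc (xs d1, ys d1) = cc (xs d2, ys d2)" using d(3) i1 i2 unfolding f_def by auto
      moreover have "(xs d1, ys d1) \<noteq> (xs d2, ys d2)" using xs[of d1] xs[of d2] ne by auto
      ultimately have "perp Lr (xs d1) (xs d2)" using spec_cc i1 i2 unfolding spec_col_def by blast
      moreover have "tleq Lr (xs d1) (xs d2) \<or> tleq Lr (xs d2) (xs d1)" using ch xs by blast
      ultimately show False unfolding perp_def by blast
    qed
  qed
  then have "countable {\<delta>::'o. is_limit \<delta>}" unfolding countable_def by blast
  then show False using limits_uncountable[OF unc cnt] by blast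
qed

lemma inA_gen:
  assumes unc: "uncountable (UNIV::'o set)" and cnt: "\<forall>\<alpha>::'o. countable {\<beta>. \<beta> < \<alpha>}"
  shows "in_A (UNIV, Lr)"
proof -
  have tree: "tree_on UNIV Lr None"
    unfolding tree_on_def
    using Lirr Ltr Llin Lrt wfP_ht[of Lr, OF Lht] by blast
  have lev: "\<forall>x\<in>UNIV. x \<noteq> None \<longrightarrow> ht ` {y. Lr y x \<and> y \<noteq> None} = {Some \<beta> | \<beta>. Some \<beta> < ht x}"
    using level by blast
  have hts: "\<forall>\<alpha>. \<exists>x\<in>UNIV. ht x = Some \<alpha>"
  proof
    fix \<alpha> show "\<exists>x\<in>UNIV. ht x = Some \<alpha>" using ht_Some[of \<alpha> 0] by blast
  qed
  have br: "\<forall>B. is_branch UNIV Lr B \<longrightarrow> countable B" using branch_countable[OF unc cnt] by blast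
  have nm: "\<forall>x\<in>UNIV. \<forall>y\<in>UNIV. x \<noteq> y \<longrightarrow> ht x = ht y \<longrightarrow> limit_ht x \<longrightarrow> {z. Lr z x} \<noteq> {z. Lr z y}"
    using normal by blast
  have hm: "\<forall>x y. Lr x y \<longrightarrow> ht x < ht y" using Lht by blast
  show ?thesis unfolding in_A_def using tree hm lev hts br nm by simp
qed

lemma gen_main:
  assumes unc: "uncountable (UNIV::'o set)" and cnt: "\<forall>\<alpha>::'o. countable {\<beta>. \<beta> < \<alpha>}"
  shows "\<exists>c. Map.graph c = (\<Union>p\<in>G. Map.graph (c_col p))
                   \<and> in_A2sp (\<Union>p\<in>G. c_u p, \<lambda>x y. \<exists>p\<in>G. c_lt p x y) (S, lt) c"
proof -
  have Le: "(\<lambda>x y. \<exists>p\<in>G. c_lt p x y) = Lr" by (intro ext) (simp add: Lr_def)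
  have "in_A2sp (UNIV, Lr) (S, lt) cc"
    unfolding in_A2sp_def using inA_gen[OF unc cnt] TA dom_cc spec_cc by simp
  then show ?thesis using graph_cc unfolding Le Ueq by blast
qed

end

definition Dg :: "'o::wellorder node set \<times> ('o node \<Rightarrow> 'o node \<Rightarrow> bool) \<Rightarrow> 'o node \<Rightarrow> 'o \<Rightarrow> bool \<Rightarrow> 'o cond set" where
  "Dg T x \<beta> b = (if b \<or> x \<notin> fst T then D3 T x \<beta> else D1 T x)"

lemma trivial_cond:
  fixes T :: "'o::wellorder node set \<times> ('o node \<Rightarrow> 'o node \<Rightarrow> bool)"
  assumes "None \<in> fst T"
  shows "is_cond T ({None}, {None}, \<lambda>_ _. False, Map.empty)"
proof -
  have tr: "tree_on {None} (\<lambda>_ _. False) (None :: 'o node)"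
    unfolding tree_on_def using wfP_ht[of "\<lambda>_ _. False"] by simp
  have lp: "limit_pairs {None} {None :: 'o node} = {}"
  proof -
    have "False" if hk: "k \<in> limit_pairs {None} {None :: 'o node}" for k
    proof -
      obtain x y where "k = (x, y)" "x \<in> {None}" "limit_ht x" using hk unfolding limit_pairs_def by blast
      then have "limit_ht (None :: 'o node)" by blast
      then show False unfolding limit_ht_def by simp
    qed
    then show ?thesis by blast
  qed
  have sc: "spec_col (\<lambda>_ _. False) (snd T) Map.empty" unfolding spec_col_def by simp
  show ?thesis unfolding is_cond_tuple using assms tr lp sc by simp
qed

lemma enc_ex:
  assumes unc: "uncountable (UNIV :: 'o::wellorder set)"
  shows "ordLeq3 (card_of (UNIV :: ('o node \<times> 'o \<times> bool) set)) (card_of (UNIV :: 'o set))"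
proof -
  have inf: "infinite (UNIV::'o set)" using unc countable_finite by blast
  have "ordIso2 (card_of ((UNIV::'o set) \<times> (UNIV::'o set))) (card_of (UNIV::'o set))"
    using card_of_Times_same_infinite[OF inf] .
  then obtain pr :: "'o \<times> 'o \<Rightarrow> 'o" where pr: "bij_betw pr (UNIV \<times> UNIV) UNIV"
    using card_of_ordIso by blast
  have prinj: "inj pr" using pr by (simp add: bij_betw_def)
  have "ordLeq3 (card_of (UNIV::nat set)) (card_of (UNIV::'o set))" using infinite_iff_card_of_nat inf by blast
  then obtain j :: "nat \<Rightarrow> 'o" where j: "inj j" using card_of_ordLeq[of "UNIV::nat set" "UNIV::'o set"] by blast
  define en :: "'o node \<Rightarrow> 'o" where "en x = (case x of None \<Rightarrow> pr (j 0, j 0) | Some an \<Rightarrow> pr (fst an, j (Suc (snd an))))" for x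
  have eninj: "inj en"
  proof (rule injI)
    fix x y assume h: "en x = en y"
    show "x = y"
    proof (cases x)
      case None
      show ?thesis
      proof (cases y)
        case None then show ?thesis using \<open>x = None\<close> by simp
      next
        case (Some b)
        then have "pr (j 0, j 0) = pr (fst b, j (Suc (snd b)))" using h None unfolding en_def by simp
        then have "(j 0, j 0) = (fst b, j (Suc (snd b)))" by (rule injD[OF prinj])
        then have "j 0 = j (Suc (snd b))" by (metis snd_conv)
        then show ?thesis using inj_eq[OF j] by simp
      qed
    next
      case (Some a)
      show ?thesis
      proof (cases y)
        case None
        then have "pr (fst a, j (Suc (snd a))) = pr (j 0, j 0)" using h Some unfolding en_def by simp
        then have "(fst a, j (Suc (snd a))) = (j 0, j 0)" by (rule injD[OF prinj])
        then have "j 0 = j (Suc (snd a))" by (metis snd_conv)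
        then show ?thesis using inj_eq[OF j] by simp
      next
        case (Some b)
        then have "pr (fst a, j (Suc (snd a))) = pr (fst b, j (Suc (snd b)))" using h \<open>x = Some a\<close> unfolding en_def by simp
        then have "(fst a, j (Suc (snd a))) = (fst b, j (Suc (snd b)))" by (rule injD[OF prinj])
        then have "fst a = fst b" "snd a = snd b" using inj_eq[OF j] by auto
        then show ?thesis using Some \<open>x = Some a\<close> by (simp add: prod_eq_iff)
      qed
    qed
  qed
  define e :: "'o node \<times> 'o \<times> bool \<Rightarrow> 'o" where "e z = pr (en (fst z), pr (fst (snd z), j (if snd (snd z) then 1 else 0)))" for z
  have "inj e"
  proof (rule injI)
    fix z1 z2 assume "e z1 = e z2"
    then have "en (fst z1) = en (fst z2)" "fst (snd z1) = fst (snd z2)"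
      "j (if snd (snd z1) then 1 else 0) = j (if snd (snd z2) then 1 else 0)"
      unfolding e_def using inj_eq[OF prinj] by auto
    then have "fst z1 = fst z2" "fst (snd z1) = fst (snd z2)" "snd (snd z1) = snd (snd z2)"
      using inj_eq[OF eninj] inj_eq[OF j] by (auto split: if_splits)
    then show "z1 = z2" by (simp add: prod_eq_iff)
  qed
  then show ?thesis using card_of_ordLeq[of "UNIV :: ('o node \<times> 'o \<times> bool) set" "UNIV :: 'o set"] by blast
qed

theorem lemma4p3:
  fixes S :: "('o::wellorder) node set" and lt :: "'o node \<Rightarrow> 'o node \<Rightarrow> bool"
  assumes "uncountable (UNIV :: 'o set)"
    and "\<forall>\<alpha>::'o. countable {\<beta>. \<beta> < \<alpha>}"
    and "in_A (S, lt)"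
  shows "\<exists>F. (\<exists>f. bij_betw f (UNIV :: 'o set) F)
           \<and> (\<forall>D\<in>F. dense_in (QQ (S, lt)) D)
           \<and> (\<forall>G. filter_in (QQ (S, lt)) G \<and> (\<forall>D\<in>F. G \<inter> D \<noteq> {}) \<longrightarrow>
                (\<exists>c. Map.graph c = (\<Union>p\<in>G. Map.graph (c_col p))
                   \<and> in_A2sp (\<Union>p\<in>G. c_u p, \<lambda>x y. \<exists>p\<in>G. c_lt p x y) (S, lt) c))"
proof -
  define T where "T = (S, lt)"
  define g where "g z = Dg T (fst z) (fst (snd z)) (snd (snd z))" for z
  define F where "F = range g"
  have dense: "\<forall>D\<in>F. dense_in (QQ (S, lt)) D"
  proof
    fix D assume "D \<in> F"
    then obtain x \<beta> b where D: "D = Dg T x \<beta> b" unfolding F_def g_def by auto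
    show "dense_in (QQ (S, lt)) D"
    proof (cases "b \<or> x \<notin> fst T")
      case True then show ?thesis using D dense_D3 unfolding Dg_def T_def by simp
    next
      case False then show ?thesis using D dense_D1[of x T] unfolding Dg_def T_def by simp
    qed
  qed
  have gen: "\<exists>c. Map.graph c = (\<Union>p\<in>G. Map.graph (c_col p))
                   \<and> in_A2sp (\<Union>p\<in>G. c_u p, \<lambda>x y. \<exists>p\<in>G. c_lt p x y) (S, lt) c"
    if G: "filter_in (QQ (S, lt)) G" and mt: "\<forall>D\<in>F. G \<inter> D \<noteq> {}" for G
  proof -
    have m1: "G \<inter> D1 (S,lt) s \<noteq> {}" if "s \<in> S" for s
    proof -
      have "g (s, undefined, False) \<in> F" unfolding F_def by blast
      moreover have "g (s, undefined, False) = D1 (S,lt) s" using that unfolding g_def Dg_def T_def by simp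
      ultimately show ?thesis using mt by metis
    qed
    have m3: "G \<inter> D3 (S,lt) x \<beta> \<noteq> {}" for x \<beta>
    proof -
      have "g (x, \<beta>, True) \<in> F" unfolding F_def by blast
      moreover have "g (x, \<beta>, True) = D3 (S,lt) x \<beta>" unfolding g_def Dg_def T_def by simp
      ultimately show ?thesis using mt by metis
    qed
    interpret gen S lt G using assms(3) G m1 m3 by unfold_locales auto
    show ?thesis using gen_main[OF assms(1,2)] .
  qed
  have NS: "None \<in> fst T" using assms(3) unfolding in_A_def tree_on_def T_def by simp
  have p0: "is_cond T ({None}, {None}, \<lambda>_ _. False, Map.empty)" using trivial_cond[OF NS] .
  have "\<forall>\<alpha>. \<exists>col'. is_cond T (insert (Some (\<alpha>, 0)) {None}, {None}, ins_lt (\<lambda>_ _. False) (Some (\<alpha>, 0)) None {}, col')"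
  proof
    fix \<alpha> :: 'o
    have "Some (\<alpha>, 0) \<notin> {None}" "Some (\<alpha>, 0) \<noteq> None" by auto
    then show "\<exists>col'. is_cond T (insert (Some (\<alpha>, 0)) {None}, {None}, ins_lt (\<lambda>_ _. False) (Some (\<alpha>, 0)) None {}, col')"
      using add_leaf[OF p0] by blast
  qed
  then obtain cf where cf: "\<And>\<alpha>. is_cond T (insert (Some (\<alpha>, 0)) {None}, {None}, ins_lt (\<lambda>_ _. False) (Some (\<alpha>, 0)) None {}, cf \<alpha>)"
    by metis
  define h where "h \<alpha> = g (Some (\<alpha>, 0), \<alpha>, True)" for \<alpha>
  have hD: "h \<alpha> = D3 T (Some (\<alpha>, 0)) \<alpha>" for \<alpha> unfolding h_def g_def Dg_def by simp
  have inq: "(insert (Some (\<alpha>, 0)) {None}, {None}, ins_lt (\<lambda>_ _. False) (Some (\<alpha>, 0)) None {}, cf \<alpha>) \<in> h \<alpha>" for \<alpha>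
    unfolding hD D3_def QQ_def using cf[of \<alpha>] by simp
  have hinj: "inj h"
  proof (rule injI)
    fix a1 a2 assume "h a1 = h a2"
    then have "(insert (Some (a1, 0)) {None}, {None}, ins_lt (\<lambda>_ _. False) (Some (a1, 0)) None {}, cf a1) \<in> h a2"
      using inq[of a1] by simp
    then have "Some (a2, 0) \<in> insert (Some (a1, 0)) {None}" unfolding hD D3_def by simp
    then show "a1 = a2" by simp
  qed
  have l1: "ordLeq3 (card_of (UNIV :: 'o set)) (card_of F)"
  proof -
    have "h ` UNIV \<subseteq> F" unfolding F_def h_def by blast
    then show ?thesis using card_of_ordLeq[of "UNIV :: 'o set" F] hinj by blast
  qed
  have l2: "ordLeq3 (card_of F) (card_of (UNIV :: 'o set))"
  proof -
    have "ordLeq3 (card_of F) (card_of (UNIV :: ('o node \<times> 'o \<times> bool) set))"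
      unfolding F_def by (rule card_of_image)
    then show ?thesis using enc_ex[OF assms(1)] ordLeq_transitive by blast
  qed
  have "ordIso2 (card_of (UNIV :: 'o set)) (card_of F)" using l1 l2 ordIso_iff_ordLeq by blast
  then have bij: "\<exists>f. bij_betw f (UNIV :: 'o set) F" using card_of_ordIso by blast
  show ?thesis using bij dense gen by blast
qed

end
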